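(* Let $G=(V,E)$ be a finite connected graph with root $O$, and consider the deterministic search game $\langle G,O,\mathbf 1\rangle$. Then $\mathrm{val}(\mathbf 1)\le |E|$. Moreover, $\mathrm{val}(\mathbf 1)=|E|$ if and only if $G$ is a tree. When $G$ is a tree, the equal branching density (for the hider) and the uniform Chinese postman strategy (for the searcher) are optimal strategies.
   Context: Deterministic search game $\langle G,O,\mathbf 1\rangle$: this is a zero-sum game between a hider (the maximizer) and a searcher (the minimizer) played on a finite connected undirected graph $G=(V,E)$ with unit-length edges and a distinguished root $O$. The hider chooses an edge $e\in E$ and stays there forever; his mixed strategies are probability distributions on $E$. The searcher starts at $O$. At each stage $t=1,2,\dots$ she either stays at her current vertex or traverses an edge incident to it. The payoff to the hider is the first stage $t$ at which the searcher traverses $e$ (expected value under randomization). $\mathrm{val}(\mathbf 1)$ denotes the value of this game. A Chinese postman tour is a closed walk from $O$ traversing every edge at least once, of minimal length. The uniform Chinese postman strategy mixes with equal probability over all Chinese postman tours starting at $O$ and follows the chosen tour. For a tree rooted at $O$, orient every edge away from $O$. For an edge $e$ with head $w$, let $E_e$ be the set consisting of $e$ and all edges of the subtree below $w$. A leaf edge is an edge whose head has no outgoing edge. The equal branching density is the unique probability distribution $\varepsilon^*$ on $E$ such that: - $\varepsilon^*$ is supported on the leaf edges; - at every vertex $v$ with at least two outgoing edges $e_1,\dots,e_n$, the ratio $\varepsilon^*(E_{e_i})/|E_{e_i}|$ is the same for all $i$. *)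

theory Defs
  imports "HOL-Probability.Probability"
begin

definition rooted_graph :: "'v set \<Rightarrow> 'v set set \<Rightarrow> 'v \<Rightarrow> bool" where
  "rooted_graph V E r \<longleftrightarrow> finite V \<and> r \<in> V \<and>
     (\<forall>e\<in>E. \<exists>u v. e = {u, v} \<and> u \<noteq> v \<and> u \<in> V \<and> v \<in> V)"

definition adj :: "'v set set \<Rightarrow> ('v \<times> 'v) set" where
  "adj F = {(u, v). {u, v} \<in> F}"

definition reach :: "'v set set \<Rightarrow> 'v \<Rightarrow> 'v set" where
  "reach F r = {x. (r, x) \<in> (adj F)\<^sup>*}"

definition connected_graph :: "'v set \<Rightarrow> 'v set set \<Rightarrow> bool" where
  "connected_graph V E \<longleftrightarrow> (\<forall>u\<in>V. \<forall>v\<in>V. (u, v) \<in> (adj E)\<^sup>*)"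

definition acyclic_graph :: "'v set set \<Rightarrow> bool" where
  "acyclic_graph E \<longleftrightarrow> \<not> (\<exists>cs. length cs \<ge> 3 \<and> distinct cs \<and>
      (\<forall>i<length cs. {cs ! i, cs ! ((i + 1) mod length cs)} \<in> E))"

definition is_tree :: "'v set \<Rightarrow> 'v set set \<Rightarrow> bool" where
  "is_tree V E \<longleftrightarrow> connected_graph V E \<and> acyclic_graph E"

text \<open>Pure searcher strategies: infinite walks; position at time 0 is r, at each stage
  (t+1) she stays or traverses an edge incident to her current vertex.\<close>
definition walk :: "'v set set \<Rightarrow> 'v \<Rightarrow> (nat \<Rightarrow> 'v) \<Rightarrow> bool" where
  "walk E r w \<longleftrightarrow> w 0 = r \<and> (\<forall>t. w (Suc t) = w t \<or> {w t, w (Suc t)} \<in> E)"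

text \<open>Edge e is traversed at stage Suc t.\<close>
definition traverses_at :: "(nat \<Rightarrow> 'v) \<Rightarrow> 'v set \<Rightarrow> nat \<Rightarrow> bool" where
  "traverses_at w e t \<longleftrightarrow> w t \<noteq> w (Suc t) \<and> {w t, w (Suc t)} = e"

definition hit_time :: "(nat \<Rightarrow> 'v) \<Rightarrow> 'v set \<Rightarrow> ennreal" where
  "hit_time w e = (if \<exists>t. traverses_at w e t
      then of_nat (Suc (LEAST t. traverses_at w e t)) else \<infinity>)"

definition searcher_strategy :: "'v set set \<Rightarrow> 'v \<Rightarrow> (nat \<Rightarrow> 'v) pmf \<Rightarrow> bool" where
  "searcher_strategy E r \<sigma> \<longleftrightarrow> set_pmf \<sigma> \<subseteq> {w. walk E r w}"

definition hider_strategy :: "'v set set \<Rightarrow> ('v set \<Rightarrow> real) \<Rightarrow> bool" where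
  "hider_strategy E p \<longleftrightarrow> (\<forall>e\<in>E. p e \<ge> 0) \<and> (\<Sum>e\<in>E. p e) = 1"

definition searcher_guarantee :: "'v set set \<Rightarrow> (nat \<Rightarrow> 'v) pmf \<Rightarrow> ennreal" where
  "searcher_guarantee E \<sigma> = (SUP e\<in>E. \<integral>\<^sup>+ w. hit_time w e \<partial>measure_pmf \<sigma>)"

definition hider_guarantee :: "'v set set \<Rightarrow> 'v \<Rightarrow> ('v set \<Rightarrow> real) \<Rightarrow> ennreal" where
  "hider_guarantee E r p = (INF w\<in>{w. walk E r w}. \<Sum>e\<in>E. ennreal (p e) * hit_time w e)"

definition game_val :: "'v set set \<Rightarrow> 'v \<Rightarrow> ennreal" where
  "game_val E r = (INF \<sigma>\<in>{\<sigma>. searcher_strategy E r \<sigma>}. searcher_guarantee E \<sigma>)"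

definition closed_cover_walk :: "'v set set \<Rightarrow> 'v \<Rightarrow> 'v list \<Rightarrow> bool" where
  "closed_cover_walk E r xs \<longleftrightarrow> xs \<noteq> [] \<and> hd xs = r \<and> last xs = r \<and>
     (\<forall>i. Suc i < length xs \<longrightarrow> {xs ! i, xs ! Suc i} \<in> E) \<and>
     (\<forall>e\<in>E. \<exists>i. Suc i < length xs \<and> {xs ! i, xs ! Suc i} = e)"

definition chinese_postman_tour :: "'v set set \<Rightarrow> 'v \<Rightarrow> 'v list \<Rightarrow> bool" where
  "chinese_postman_tour E r xs \<longleftrightarrow> closed_cover_walk E r xs \<and>
     (\<forall>ys. closed_cover_walk E r ys \<longrightarrow> length xs \<le> length ys)"

definition follow_tour :: "'v \<Rightarrow> 'v list \<Rightarrow> nat \<Rightarrow> 'v" where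
  "follow_tour r xs t = (if t < length xs then xs ! t else r)"

definition uniform_CPT :: "'v set set \<Rightarrow> 'v \<Rightarrow> (nat \<Rightarrow> 'v) pmf" where
  "uniform_CPT E r = map_pmf (follow_tour r) (pmf_of_set {xs. chinese_postman_tour E r xs})"

definition edge_head :: "'v set set \<Rightarrow> 'v \<Rightarrow> 'v set \<Rightarrow> 'v" where
  "edge_head E r e = (THE w. w \<in> e \<and> w \<notin> reach (E - {e}) r)"

text \<open>E_e: the edge e together with all edges of the subtree below its head.\<close>
definition below :: "'v set set \<Rightarrow> 'v \<Rightarrow> 'v set \<Rightarrow> 'v set set" where
  "below E r e = insert e {f \<in> E. f \<inter> reach (E - {e}) r = {}}"

definition out_edges :: "'v set set \<Rightarrow> 'v \<Rightarrow> 'v \<Rightarrow> 'v set set" where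
  "out_edges E r v = {e \<in> E. v \<in> e \<and> edge_head E r e \<noteq> v}"

definition leaf_edge :: "'v set set \<Rightarrow> 'v \<Rightarrow> 'v set \<Rightarrow> bool" where
  "leaf_edge E r e \<longleftrightarrow> out_edges E r (edge_head E r e) = {}"

definition equal_branching_density ::
    "'v set \<Rightarrow> 'v set set \<Rightarrow> 'v \<Rightarrow> ('v set \<Rightarrow> real) \<Rightarrow> bool" where
  "equal_branching_density V E r \<epsilon> \<longleftrightarrow> hider_strategy E \<epsilon> \<and>
     (\<forall>e\<in>E. \<not> leaf_edge E r e \<longrightarrow> \<epsilon> e = 0) \<and>
     (\<forall>v\<in>V. card (out_edges E r v) \<ge> 2 \<longrightarrow>
        (\<forall>e1\<in>out_edges E r v. \<forall>e2\<in>out_edges E r v.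
           (\<Sum>f\<in>below E r e1. \<epsilon> f) / real (card (below E r e1)) =
           (\<Sum>f\<in>below E r e2. \<epsilon> f) / real (card (below E r e2))))"

end

theory Submission
  imports Defs
begin



lemma adj_sym: "sym (adj F)"
  by (auto simp: adj_def sym_def insert_commute)

lemma rt_sym: "(x,y) \<in> (adj F)\<^sup>* \<Longrightarrow> (y,x) \<in> (adj F)\<^sup>*"
  using sym_rtrancl[OF adj_sym] by (rule symD)

lemma adj_mono: "F \<subseteq> F' \<Longrightarrow> (x,y) \<in> (adj F)\<^sup>* \<Longrightarrow> (x,y) \<in> (adj F')\<^sup>*"
proof -
  assume "F \<subseteq> F'" "(x,y) \<in> (adj F)\<^sup>*"
  moreover have "adj F \<subseteq> adj F'" using \<open>F \<subseteq> F'\<close> by (auto simp: adj_def)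
  ultimately show ?thesis using rtrancl_mono by blast
qed

fun ledges :: "'v list \<Rightarrow> 'v set set" where
  "ledges (x # y # xs) = insert {x, y} (ledges (y # xs))"
| "ledges _ = {}"

lemma ledges_nth: "ledges xs = {{xs ! i, xs ! Suc i} | i. Suc i < length xs}"
proof (induction xs rule: ledges.induct)
  case (1 x y xs)
  have "{{(x # y # xs) ! i, (x # y # xs) ! Suc i} | i. Suc i < length (x # y # xs)}
      = insert {x,y} {{(y # xs) ! i, (y # xs) ! Suc i} | i. Suc i < length (y # xs)}"
    (is "?L = ?R")
  proof
    show "?L \<subseteq> ?R"
    proof
      fix z assume "z \<in> ?L"
      then obtain i where z: "z = {(x # y # xs) ! i, (x # y # xs) ! Suc i}" "Suc i < length (x # y # xs)" by blast
      show "z \<in> ?R"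
      proof (cases i)
        case 0 then show ?thesis using z by auto
      next
        case (Suc j) then show ?thesis using z by auto
      qed
    qed
  next
    show "?R \<subseteq> ?L"
    proof
      fix z assume "z \<in> ?R"
      then consider "z = {x,y}" | j where "z = {(y # xs) ! j, (y # xs) ! Suc j}" "Suc j < length (y # xs)" by blast
      then show "z \<in> ?L"
      proof cases
        case 1 then show ?thesis by (auto intro!: exI[of _ 0])
      next
        case 2 then show ?thesis by (auto intro!: exI[of _ "Suc j"])
      qed
    qed
  qed
  then show ?case using 1 by simp
qed auto

lemma ledges_append: "ledges (xs @ y # ys) = ledges (xs @ [y]) \<union> ledges (y # ys)"
  by (induction xs rule: ledges.induct) auto

lemma ledges_snoc: "xs \<noteq> [] \<Longrightarrow> ledges (xs @ [y]) = insert {last xs, y} (ledges xs)"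
  by (induction xs rule: ledges.induct) auto

lemma ledges_Cons: "ledges (x # xs) = (if xs = [] then {} else insert {x, hd xs} (ledges xs))"
  by (cases xs) auto

lemma ledges_rev: "ledges (rev xs) = ledges xs"
proof (induction xs rule: ledges.induct)
  case (1 x y xs)
  have "rev (x # y # xs) = rev (y # xs) @ [x]" by simp
  then have "ledges (rev (x # y # xs)) = insert {y, x} (ledges (rev (y # xs)))"
    using ledges_snoc[of "rev (y # xs)" x] by simp
  then show ?case using 1 by (simp add: insert_commute)
qed auto

lemma ledges_vert: "e \<in> ledges xs \<Longrightarrow> x \<in> e \<Longrightarrow> x \<in> set xs"
proof (induction xs rule: ledges.induct)
  case (1 a b xs)
  then show ?case by (cases "e = {a,b}") auto
qed auto

lemma distinct_path:
  assumes "(x,y) \<in> (adj F)\<^sup>*"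
  shows "\<exists>ps. ps \<noteq> [] \<and> hd ps = x \<and> last ps = y \<and> distinct ps \<and> ledges ps \<subseteq> F"
  using assms
proof (induction rule: rtrancl_induct)
  case base
  have "[x] \<noteq> [] \<and> hd [x] = x \<and> last [x] = x \<and> distinct [x] \<and> ledges [x] \<subseteq> F" by simp
  then show ?case by blast
next
  case (step y z)
  then obtain ps where ps: "ps \<noteq> []" "hd ps = x" "last ps = y" "distinct ps" "ledges ps \<subseteq> F" by blast
  have yz: "{y,z} \<in> F" using step(2) by (simp add: adj_def)
  show ?case
  proof (cases "z \<in> set ps")
    case True
    then obtain as bs where ab: "ps = as @ z # bs" by (meson split_list)
    have "ledges (as @ [z]) \<subseteq> F" using ps(5) unfolding ab ledges_append[of as z bs] by blast
    moreover have "hd (as @ [z]) = x" using ps(2) ab by (cases as) simp_all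
    moreover have "distinct (as @ [z])" using ps(4) ab by simp
    moreover have "as @ [z] \<noteq> [] \<and> last (as @ [z]) = z" by simp
    ultimately show ?thesis by blast
  next
    case False
    have "ledges (ps @ [z]) \<subseteq> F" using ps(1,3,5) yz by (simp add: ledges_snoc)
    moreover have "hd (ps @ [z]) = x" using ps(1,2) by simp
    moreover have "distinct (ps @ [z])" using ps(4) False by simp
    moreover have "ps @ [z] \<noteq> [] \<and> last (ps @ [z]) = z" by simp
    ultimately show ?thesis by blast
  qed
qed

locale gctx =
  fixes V :: "'v set" and E :: "'v set set" and r :: 'v
  assumes rg: "rooted_graph V E r" and conn: "connected_graph V E"
begin

lemma finV: "finite V" and rV: "r \<in> V" using rg by (auto simp: rooted_graph_def)

lemma edgeE: assumes "e \<in> E" obtains a b where "e = {a,b}" "a \<noteq> b" "a \<in> V" "b \<in> V"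
  using rg assms by (auto simp: rooted_graph_def)

lemma E_sub: "E \<subseteq> Pow V" by (auto elim: edgeE)

lemma finE: "finite E" using E_sub finV by (meson finite_Pow_iff finite_subset)

lemma conn': "u \<in> V \<Longrightarrow> v \<in> V \<Longrightarrow> (u,v) \<in> (adj E)\<^sup>*"
  using conn by (auto simp: connected_graph_def)

lemma edge_card2: "e \<in> E \<Longrightarrow> card e = 2" by (auto elim!: edgeE)

lemma edge_other: "e \<in> E \<Longrightarrow> x \<in> e \<Longrightarrow> \<exists>y. e = {x,y} \<and> x \<noteq> y"
  by (auto elim!: edgeE)

abbreviation R where "R e \<equiv> reach (E - {e}) r"

lemma r_R: "r \<in> R e" by (auto simp: reach_def)

lemma R_step: "x \<in> reach F s \<Longrightarrow> {x,y} \<in> F \<Longrightarrow> y \<in> reach F s"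
  unfolding reach_def adj_def by (auto intro: rtrancl_into_rtrancl)

lemma side: "e \<in> E \<Longrightarrow> e \<noteq> f \<Longrightarrow> a \<in> e \<Longrightarrow> b \<in> e \<Longrightarrow> a \<in> R f \<Longrightarrow> b \<in> R f"
proof -
  assume a: "e \<in> E" "e \<noteq> f" "a \<in> e" "b \<in> e" "a \<in> R f"
  show "b \<in> R f"
  proof (cases "a = b")
    case False
    then have "e = {a,b}" using a(1,3,4) by (auto elim!: edgeE)
    then show ?thesis using R_step[OF a(5), of b] a by auto
  qed (use a in auto)
qed

end




context gctx
begin

lemma reach_V: assumes "x \<in> reach F s" "F \<subseteq> E" "s \<in> V" shows "x \<in> V"
proof -
  have "(s,x) \<in> (adj F)\<^sup>*" using assms(1) unfolding reach_def by blast
  then show "x \<in> V"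
  proof (induction rule: rtrancl_induct)
    case base show ?case using assms(3) .
  next
    case (step y z)
    have "{y,z} \<in> F" using step(2) unfolding adj_def by blast
    then have "{y,z} \<in> Pow V" using assms(2) E_sub by blast
    then show ?case by blast
  qed
qed

lemma edge_neq: assumes "{x,y} \<in> E" shows "x \<noteq> y"
proof
  assume xy: "x = y"
  obtain a b where ab: "{x,y} = {a,b}" "a \<noteq> b" "a \<in> V" "b \<in> V" by (rule edgeE[OF assms])
  have "a \<in> {x,y}" "b \<in> {x,y}" using ab(1) by simp_all
  then show False using xy ab(2) by simp
qed

lemma R_V: "x \<in> R e \<Longrightarrow> x \<in> V"
  using reach_V[of x "E - {e}" r] rV by blast

lemma one_in_R: assumes "e \<in> E" shows "\<exists>x\<in>e. x \<in> R e"
proof -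
  obtain a b where ab: "e = {a,b}" "a \<noteq> b" "a \<in> V" "b \<in> V" by (rule edgeE[OF assms])
  have "x \<in> R e \<or> a \<in> R e \<or> b \<in> R e" if "(r,x) \<in> (adj E)\<^sup>*" for x
    using that
  proof (induction rule: rtrancl_induct)
    case base then show ?case using r_R by blast
  next
    case (step y z)
    have yz: "{y,z} \<in> E" using step(2) unfolding adj_def by blast
    show ?case
    proof (cases "{y,z} = e")
      case True
      then have "y = a \<or> y = b" using ab(1) by blast
      then show ?thesis using step(3) by blast
    next
      case False
      then have "{y,z} \<in> E - {e}" using yz by blast
      then have "y \<in> R e \<Longrightarrow> z \<in> R e" using R_step[of y "E - {e}" r z] by blast
      then show ?thesis using step(3) by blast
    qed
  qed
  moreover have "(r,a) \<in> (adj E)\<^sup>*" using conn'[OF rV ab(3)] .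
  ultimately have "a \<in> R e \<or> b \<in> R e" by blast
  then show ?thesis using ab(1) by blast
qed

end

locale tctx = gctx +
  assumes acyc: "acyclic_graph E"
begin

lemma not_both:
  assumes e: "e \<in> E" "e = {a,b}" "a \<noteq> b" and a: "a \<in> R e" and b: "b \<in> R e"
  shows False
proof -
  have ra: "(r,a) \<in> (adj (E - {e}))\<^sup>*" and rb: "(r,b) \<in> (adj (E - {e}))\<^sup>*"
    using a b by (simp_all add: reach_def)
  have "(a,r) \<in> (adj (E - {e}))\<^sup>*" using rt_sym[OF ra] .
  then have "(a,b) \<in> (adj (E - {e}))\<^sup>*" using rb by (rule rtrancl_trans)
  then have "\<exists>ps. ps \<noteq> [] \<and> hd ps = a \<and> last ps = b \<and> distinct ps \<and> ledges ps \<subseteq> E - {e}"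
    by (rule distinct_path)
  then obtain ps where "ps \<noteq> [] \<and> hd ps = a \<and> last ps = b \<and> distinct ps \<and> ledges ps \<subseteq> E - {e}"
    by (rule exE)
  then have ps: "ps \<noteq> []" "hd ps = a" "last ps = b" "distinct ps" "ledges ps \<subseteq> E - {e}" by simp_all
  have l2: "length ps \<ge> 2"
  proof (rule ccontr)
    assume "\<not> 2 \<le> length ps"
    moreover have "length ps > 0" using ps(1) by simp
    ultimately have "length ps = 1" by linarith
    then obtain z where "ps = [z]" by (cases ps) auto
    then have "a = b" using ps(2,3) by simp
    then show False using e(3) by simp
  qed
  have l3: "length ps \<ge> 3"
  proof (rule ccontr)
    assume "\<not> 3 \<le> length ps"
    then have "length ps = 2" using l2 by auto
    then obtain z w where zw: "ps = [z,w]" by (cases ps; cases "tl ps") auto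
    then have "z = a" "w = b" using ps(2,3) by simp_all
    then have "e \<in> ledges ps" using zw e(2) by simp
    then show False using ps(5) by blast
  qed
  have "\<forall>i<length ps. {ps ! i, ps ! ((i + 1) mod length ps)} \<in> E"
  proof (intro allI impI)
    fix i assume i: "i < length ps"
    show "{ps ! i, ps ! ((i + 1) mod length ps)} \<in> E"
    proof (cases "Suc i < length ps")
      case True
      then have "{ps ! i, ps ! Suc i} \<in> ledges ps" unfolding ledges_nth by blast
      then have "{ps ! i, ps ! Suc i} \<in> E" using ps(5) by blast
      moreover have "(i + 1) mod length ps = Suc i" using True by simp
      ultimately show ?thesis by simp
    next
      case False
      then have ii: "i = length ps - 1" using i by simp
      then have "ps ! i = b" using ps(1,3) by (simp add: last_conv_nth)
      moreover have "i + 1 = length ps" using ii i by simp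
      then have "(i + 1) mod length ps = 0" by simp
      moreover have "ps ! 0 = a" using ps(1,2) by (simp add: hd_conv_nth)
      ultimately have "{ps ! i, ps ! ((i + 1) mod length ps)} = e" using e(2) by (simp add: insert_commute)
      then show ?thesis using e(1) by simp
    qed
  qed
  then have "\<exists>cs. length cs \<ge> 3 \<and> distinct cs \<and> (\<forall>i<length cs. {cs ! i, cs ! ((i + 1) mod length cs)} \<in> E)"
    using ps(4) l3 by (intro exI[of _ ps]) simp
  then show False using acyc unfolding acyclic_graph_def by blast
qed

lemma edge_ex1: assumes "e \<in> E"
  shows "\<exists>a b. e = {a,b} \<and> a \<noteq> b \<and> a \<in> R e \<and> b \<notin> R e"
proof -
  obtain x where x: "x \<in> e" "x \<in> R e" using one_in_R assms by blast
  obtain y where y: "e = {x,y}" "x \<noteq> y" using edge_other[OF assms x(1)] by blast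
  have "y \<notin> R e" using not_both[OF assms y(1) y(2) x(2)] by blast
  then show ?thesis using x y by blast
qed

definition tl_of where "tl_of e = (THE w. w \<in> e \<and> w \<in> reach (E - {e}) r)"

abbreviation hd_of where "hd_of e \<equiv> edge_head E r e"
abbreviation B where "B e \<equiv> below E r e"
abbreviation out where "out v \<equiv> out_edges E r v"
abbreviation leaf where "leaf e \<equiv> leaf_edge E r e"

lemma edge_split: assumes "e \<in> E"
  shows "e = {tl_of e, hd_of e}" "tl_of e \<noteq> hd_of e" "tl_of e \<in> R e" "hd_of e \<notin> R e"
proof -
  obtain a b where ab: "e = {a,b}" "a \<noteq> b" "a \<in> R e" "b \<notin> R e" using edge_ex1[OF assms] by blast
  have t: "tl_of e = a" unfolding tl_of_def
    by (rule the_equality) (use ab in auto)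
  have h: "hd_of e = b" unfolding edge_head_def
    by (rule the_equality) (use ab in auto)
  show "e = {tl_of e, hd_of e}" "tl_of e \<noteq> hd_of e" "tl_of e \<in> R e" "hd_of e \<notin> R e"
    using ab t h by auto
qed

lemma edge_mem: assumes "e \<in> E" shows "x \<in> e \<longleftrightarrow> x = tl_of e \<or> x = hd_of e"
proof -
  have "e = {tl_of e, hd_of e}" by (rule edge_split(1)[OF assms])
  then have "(x \<in> e) = (x \<in> {tl_of e, hd_of e})" by (rule arg_cong[where f="\<lambda>S. x \<in> S"])
  also have "\<dots> = (x = tl_of e \<or> x = hd_of e)" by simp
  finally show ?thesis .
qed

lemma tl_in: "e \<in> E \<Longrightarrow> tl_of e \<in> e" and hd_in: "e \<in> E \<Longrightarrow> hd_of e \<in> e"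
  using edge_mem by blast+

lemma in_edge_R: "e \<in> E \<Longrightarrow> x \<in> e \<Longrightarrow> x \<in> R e \<Longrightarrow> x = tl_of e"
  using edge_split(4)[of e] edge_mem[of e x] by blast

lemma in_edge_nR: "e \<in> E \<Longrightarrow> x \<in> e \<Longrightarrow> x \<notin> R e \<Longrightarrow> x = hd_of e"
  using edge_split(3)[of e] edge_mem[of e x] by blast

lemma out_iff: "f \<in> out v \<longleftrightarrow> f \<in> E \<and> tl_of f = v"
proof
  assume "f \<in> out v"
  then have f: "f \<in> E" "v \<in> f" "hd_of f \<noteq> v" by (auto simp: out_edges_def)
  then show "f \<in> E \<and> tl_of f = v" using edge_mem[OF f(1), of v] by blast
next
  assume a: "f \<in> E \<and> tl_of f = v"
  then show "f \<in> out v" using tl_in[of f] edge_split(2)[of f] by (auto simp: out_edges_def)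
qed

lemma R_sub: assumes "h \<in> E" "h \<inter> R g = {}" shows "R g \<subseteq> R h"
proof
  fix x assume "x \<in> R g"
  then have "(r,x) \<in> (adj (E - {g}))\<^sup>*" by (simp add: reach_def)
  then have "(r,x) \<in> (adj (E - {h}))\<^sup>*"
  proof (induction rule: rtrancl_induct)
    case (step y z)
    have yz: "{y,z} \<in> E - {g}" using step(2) by (simp add: adj_def)
    have "y \<in> R g" using step(1) by (simp add: reach_def)
    then have "{y,z} \<noteq> h" using assms(2) by auto
    then have "(y,z) \<in> adj (E - {h})" using yz by (simp add: adj_def)
    then show ?case using step(3) by (meson rtrancl.rtrancl_into_rtrancl)
  qed simp
  then show "x \<in> R h" by (simp add: reach_def)
qed

lemma B_sub_E: "g \<in> E \<Longrightarrow> B g \<subseteq> E" by (auto simp: below_def)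

lemma B_self: "g \<in> B g" by (simp add: below_def)

lemma B_trans: assumes "h \<in> B g" shows "B h \<subseteq> B g"
proof (cases "h = g")
  case False
  then have h: "h \<in> E" "h \<inter> R g = {}" using assms by (auto simp: below_def)
  have "R g \<subseteq> R h" using R_sub[OF h] .
  then show ?thesis using h by (auto simp: below_def)
qed simp

lemma B_iff_hd: assumes "l \<in> E" "f \<in> E" shows "l \<in> B f \<longleftrightarrow> hd_of l \<notin> R f"
proof (cases "l = f")
  case True then show ?thesis using edge_split[OF assms(2)] B_self by auto
next
  case False
  have "hd_of l \<in> l" "tl_of l \<in> l" using edge_split[OF assms(1)] by auto
  then have "l \<inter> R f = {} \<longleftrightarrow> hd_of l \<notin> R f"
    using side[OF assms(1) False] by blast
  then show ?thesis using False assms by (auto simp: below_def)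
qed

lemma beyond_reach: assumes g: "g \<in> E" and x: "x \<in> V" "x \<notin> R g"
  shows "(hd_of g, x) \<in> (adj (E - {g}))\<^sup>*"
proof -
  have "(r,x) \<in> (adj E)\<^sup>*" using conn' rV x by auto
  then have "x \<in> R g \<or> (hd_of g, x) \<in> (adj (E - {g}))\<^sup>*"
  proof (induction rule: rtrancl_induct)
    case base then show ?case using r_R by auto
  next
    case (step y z)
    have yz: "{y,z} \<in> E" using step(2) by (simp add: adj_def)
    show ?case
    proof (cases "{y,z} = g")
      case True
      then have "z \<in> g" by auto
      then have "z = tl_of g \<or> z = hd_of g" using edge_split[OF assms(1)] by auto
      then show ?thesis using edge_split[OF assms(1)] by auto
    next
      case False
      then have "(y,z) \<in> adj (E - {g})" using yz by (simp add: adj_def)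
      then show ?thesis using step(3) R_step[of y "E - {g}" r z] yz False
        by (auto simp: adj_def intro: rtrancl_into_rtrancl)
    qed
  qed
  then show ?thesis using x by auto
qed

lemma child_path:
  assumes F: "F \<subseteq> E" and p: "(s,x) \<in> (adj F)\<^sup>*" and P: "\<forall>e\<in>F. s \<in> e \<longrightarrow> s \<in> R e"
  shows "x = s \<or> (\<exists>f\<in>out s. x \<notin> R f)"
  using p
proof (induction rule: rtrancl_induct)
  case base then show ?case by simp
next
  case (step y z)
  have yz: "{y,z} \<in> F" using step(2) by (simp add: adj_def)
  then have yzE: "{y,z} \<in> E" using F by auto
  from step(3) show ?case
  proof
    assume ys: "y = s"
    then have sR: "s \<in> R {y,z}" using P yz by auto
    have "y \<noteq> z" using yzE by (rule edge_neq)
    have "tl_of {y,z} = y" using in_edge_R[OF yzE _ sR] ys by auto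
    then have o: "{y,z} \<in> out s" using ys yzE out_iff by auto
    have "z \<notin> R {y,z}"
    proof
      assume "z \<in> R {y,z}"
      then have "z = tl_of {y,z}" using in_edge_R[OF yzE] by auto
      then show False using \<open>tl_of {y,z} = y\<close> \<open>y \<noteq> z\<close> by auto
    qed
    then show ?thesis using o by blast
  next
    assume "\<exists>f\<in>out s. y \<notin> R f"
    then obtain f where f: "f \<in> out s" "y \<notin> R f" by blast
    have fE: "f \<in> E" "tl_of f = s" using f(1) out_iff by auto
    show ?thesis
    proof (cases "{y,z} = f")
      case True
      then have "z \<in> f" by auto
      then have "z = s \<or> z = hd_of f" using edge_split[OF fE(1)] fE(2) by auto
      then show ?thesis using edge_split[OF fE(1)] f(1) by auto
    next
      case False
      have "z \<notin> R f" using side[OF yzE False, of z y] f(2) by auto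
      then show ?thesis using f(1) by blast
    qed
  qed
qed

lemma cross:
  assumes F: "F \<subseteq> E" and p: "(a,x) \<in> (adj F)\<^sup>*" and f: "f \<in> E" and a: "a \<in> R f" and x: "x \<notin> R f"
  shows "(a, tl_of f) \<in> (adj F)\<^sup>*"
proof -
  from p have "x \<in> R f \<or> (a, tl_of f) \<in> (adj F)\<^sup>*"
  proof (induction rule: rtrancl_induct)
    case base then show ?case using a by simp
  next
    case (step y z)
    have yz: "{y,z} \<in> F" using step(2) by (simp add: adj_def)
    then have yzE: "{y,z} \<in> E" using F by auto
    show ?case
    proof (cases "y \<in> R f")
      case True
      show ?thesis
      proof (cases "{y,z} = f")
        case True
        then have "y = tl_of f" using in_edge_R[OF f _ \<open>y \<in> R f\<close>] by auto
        then show ?thesis using step(1) by simp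
      next
        case False
        then show ?thesis using side[OF yzE False, of y z] True by auto
      qed
    next
      case False
      then show ?thesis using step(3) step(2) by (auto intro: rtrancl_into_rtrancl)
    qed
  qed
  then show ?thesis using x by auto
qed

lemma P_root: "\<forall>e\<in>E. r \<in> e \<longrightarrow> r \<in> R e" using r_R by auto

lemma P_hd: assumes g: "g \<in> E" shows "\<forall>e\<in>E - {g}. hd_of g \<in> e \<longrightarrow> hd_of g \<in> R e"
proof (intro ballI impI)
  fix e assume e: "e \<in> E - {g}" "hd_of g \<in> e"
  obtain z where z: "e = {hd_of g, z}" "hd_of g \<noteq> z" using edge_other[of e "hd_of g"] e by auto
  have "z \<notin> R g"
  proof
    assume "z \<in> R g"
    then have "hd_of g \<in> R g" using side[of e g z "hd_of g"] e z by auto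
    then show False using edge_split[OF g] by auto
  qed
  then have "e \<inter> R g = {}" using z edge_split[OF g] by auto
  then have "R g \<subseteq> R e" using R_sub e by auto
  then have "tl_of g \<in> R e" using edge_split[OF g] by auto
  moreover have "g \<noteq> e" using e by auto
  ultimately show "hd_of g \<in> R e" using side[OF g, of e "tl_of g" "hd_of g"] edge_split[OF g] by auto
qed

lemma cover_gen:
  assumes F: "F \<subseteq> E" and P: "\<forall>e\<in>F. s \<in> e \<longrightarrow> s \<in> R e"
    and h: "h \<in> F" "x \<in> h" and p: "(s,x) \<in> (adj F)\<^sup>*"
  shows "\<exists>f\<in>out s. h \<in> B f"
proof -
  have hE: "h \<in> E" using F h by auto
  from child_path[OF F p P] show ?thesis
  proof
    assume "x = s"
    then have "s \<in> R h" using P h by auto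
    then have "tl_of h = s" using in_edge_R[OF hE] h \<open>x = s\<close> by auto
    then have "h \<in> out s" using hE out_iff by auto
    then show ?thesis using B_self by blast
  next
    assume "\<exists>f\<in>out s. x \<notin> R f"
    then obtain f where f: "f \<in> out s" "x \<notin> R f" by blast
    show ?thesis
    proof (cases "h = f")
      case True then show ?thesis using f B_self by blast
    next
      case False
      have "h \<inter> R f = {}" using side[OF hE False] h(2) f(2) by blast
      then show ?thesis using f hE by (auto simp: below_def)
    qed
  qed
qed

lemma cover_r: "h \<in> E \<Longrightarrow> \<exists>f\<in>out r. h \<in> B f"
proof -
  assume h: "h \<in> E"
  obtain a b where ab: "h = {a,b}" "a \<noteq> b" "a \<in> V" "b \<in> V" by (rule edgeE[OF h])
  show ?thesis using cover_gen[OF _ P_root h, of a] conn'[OF rV ab(3)] ab by auto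
qed

lemma cover_g: assumes g: "g \<in> E" and h: "h \<in> B g" "h \<noteq> g" shows "\<exists>f\<in>out (hd_of g). h \<in> B f"
proof -
  have hE: "h \<in> E" "h \<inter> R g = {}" using h by (auto simp: below_def)
  obtain a b where ab: "h = {a,b}" "a \<noteq> b" "a \<in> V" "b \<in> V" by (rule edgeE[OF hE(1)])
  have "a \<notin> R g" using hE ab by auto
  then have p: "(hd_of g, a) \<in> (adj (E - {g}))\<^sup>*" using beyond_reach[OF g ab(3)] by auto
  show ?thesis using cover_gen[OF _ P_hd[OF g], of h a] p ab hE h by auto
qed

lemma child_sub: assumes g: "g \<in> E" and f: "f \<in> out (hd_of g)"
  shows "f \<in> B g" "f \<noteq> g" "B f \<subseteq> B g" "g \<notin> B f"
proof -
  have fE: "f \<in> E" "tl_of f = hd_of g" using f out_iff by auto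
  have fg: "f \<noteq> g" using fE edge_split[OF g] by auto
  have hf: "hd_of f \<notin> R g"
  proof
    assume "hd_of f \<in> R g"
    then have "tl_of f \<in> R g" using side[OF fE(1) fg, of "hd_of f" "tl_of f"] edge_split[OF fE(1)] by auto
    then show False using fE(2) edge_split[OF g] by auto
  qed
  have "x \<notin> R g" if "x \<in> f" for x
  proof -
    have "x = tl_of f \<or> x = hd_of f" using that edge_mem[OF fE(1)] by blast
    then show ?thesis using fE(2) edge_split(4)[OF g] hf by auto
  qed
  then have dis: "f \<inter> R g = {}" by blast
  show fB: "f \<in> B g" using dis fE by (auto simp: below_def)
  show "f \<noteq> g" by (rule fg)
  show "B f \<subseteq> B g" using B_trans[OF fB] .
  have "R g \<subseteq> R f" using R_sub[OF fE(1) dis] .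
  then have "tl_of g \<in> R f" using edge_split[OF g] by auto
  then have "g \<inter> R f \<noteq> {}" using edge_split[OF g] by auto
  then show "g \<notin> B f" using fg by (auto simp: below_def)
qed

lemma sib_disj: assumes f1: "f1 \<in> out v" and f2: "f2 \<in> out v" and ne: "f1 \<noteq> f2"
  shows "B f1 \<inter> B f2 = {}"
proof (rule ccontr)
  assume "B f1 \<inter> B f2 \<noteq> {}"
  then obtain k where k: "k \<in> B f1" "k \<in> B f2" by blast
  have f1E: "f1 \<in> E" "tl_of f1 = v" and f2E: "f2 \<in> E" "tl_of f2 = v" using f1 f2 out_iff by auto
  have vR1: "v \<in> R f1" using edge_split(3)[OF f1E(1)] f1E(2) by simp
  have vR2: "v \<in> R f2" using edge_split(3)[OF f2E(1)] f2E(2) by simp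
  have v1: "v \<in> f1" using tl_in[OF f1E(1)] f1E(2) by simp
  have v2: "v \<in> f2" using tl_in[OF f2E(1)] f2E(2) by simp
  have "k \<noteq> f1"
  proof
    assume "k = f1"
    then have "f1 \<inter> R f2 = {}" using k(2) ne by (auto simp: below_def)
    then show False using v1 vR2 by auto
  qed
  moreover have "k \<noteq> f2"
  proof
    assume "k = f2"
    then have "f2 \<inter> R f1 = {}" using k(1) ne by (auto simp: below_def)
    then show False using v2 vR1 by auto
  qed
  ultimately have kk: "k \<in> E" "k \<inter> R f1 = {}" "k \<inter> R f2 = {}" using k by (auto simp: below_def)
  obtain x y where xy: "k = {x,y}" "x \<noteq> y" "x \<in> V" "y \<in> V" by (rule edgeE[OF kk(1)])
  have x1: "x \<notin> R f1" and x2: "x \<notin> R f2" using kk xy by auto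
  have p: "(hd_of f1, x) \<in> (adj (E - {f1}))\<^sup>*" using beyond_reach[OF f1E(1) xy(3) x1] .
  have "hd_of f1 \<in> R f2" using side[OF f1E(1), of f2 v "hd_of f1"] ne vR2 v1 edge_split[OF f1E(1)] by auto
  then have "(hd_of f1, v) \<in> (adj (E - {f1}))\<^sup>*" using cross[OF _ p f2E(1) _ x2] f2E by auto
  moreover have "(r, v) \<in> (adj (E - {f1}))\<^sup>*" using vR1 by (simp add: reach_def)
  ultimately have "(r, hd_of f1) \<in> (adj (E - {f1}))\<^sup>*" using rt_sym by (meson rtrancl_trans)
  then show False using edge_split[OF f1E(1)] by (simp add: reach_def)
qed

lemma out_sub: assumes k: "k \<in> out u" "k \<in> B f" and f: "f \<in> out v" and uv: "u \<noteq> v"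
  shows "out u \<subseteq> B f"
proof
  fix k' assume k': "k' \<in> out u"
  have kE: "k \<in> E" "tl_of k = u" using k out_iff by auto
  have fE: "f \<in> E" "tl_of f = v" using f out_iff by auto
  have k'E: "k' \<in> E" "tl_of k' = u" using k' out_iff by auto
  have "k \<noteq> f" using kE fE uv by auto
  then have "k \<inter> R f = {}" using k(2) by (auto simp: below_def)
  then have uR: "u \<notin> R f" using edge_split[OF kE(1)] kE(2) by auto
  have "k' \<noteq> f" using k'E fE uv by auto
  moreover have "u \<in> k'" using edge_split[OF k'E(1)] k'E(2) by auto
  ultimately have "k' \<inter> R f = {}" using side[OF k'E(1)] uR by blast
  then show "k' \<in> B f" using k'E by (auto simp: below_def)
qed

lemma fin_out: "finite (out v)"
  using finE by (rule rev_finite_subset) (auto simp: out_edges_def)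

lemma fin_B: "g \<in> E \<Longrightarrow> finite (B g)"
  using finE B_sub_E by (meson rev_finite_subset)

lemma B_decomp: assumes g: "g \<in> E"
  shows "B g = insert g (\<Union>(B ` out (hd_of g)))" "g \<notin> \<Union>(B ` out (hd_of g))"
proof -
  show "B g = insert g (\<Union>(B ` out (hd_of g)))"
  proof
    show "B g \<subseteq> insert g (\<Union>(B ` out (hd_of g)))" using cover_g[OF g] by blast
    show "insert g (\<Union>(B ` out (hd_of g))) \<subseteq> B g" using child_sub[OF g] B_self by blast
  qed
  show "g \<notin> \<Union>(B ` out (hd_of g))" using child_sub[OF g] by blast
qed

lemma E_decomp: "E = \<Union>(B ` out r)"
proof
  show "E \<subseteq> \<Union>(B ` out r)" using cover_r by blast
  show "\<Union>(B ` out r) \<subseteq> E" using B_sub_E out_iff by blast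
qed

lemma leaf_iff: "leaf g \<longleftrightarrow> out (hd_of g) = {}" by (simp add: leaf_edge_def)

lemma leaf_B: "g \<in> E \<Longrightarrow> leaf g \<Longrightarrow> B g = {g}"
  using B_decomp leaf_iff by auto

lemma card_child: assumes "g \<in> E" "f \<in> out (hd_of g)" shows "card (B f) < card (B g)"
proof -
  have "B f \<subset> B g" using child_sub[OF assms] B_self[of g] by blast
  then show ?thesis by (rule psubset_card_mono[OF fin_B[OF assms(1)]])
qed

lemma leaf_exists: "g \<in> E \<Longrightarrow> \<exists>l\<in>B g. leaf l \<and> l \<in> E"
proof (induction "card (B g)" arbitrary: g rule: less_induct)
  case less
  show ?case
  proof (cases "leaf g")
    case True then show ?thesis using less B_self by blast
  next
    case False
    then obtain f where f: "f \<in> out (hd_of g)" using leaf_iff by blast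
    have "f \<in> E" using f out_iff by auto
    then obtain l where "l \<in> B f" "leaf l" "l \<in> E" using less(1)[OF card_child[OF less(2) f]] by blast
    then show ?thesis using child_sub(3)[OF less(2) f] by blast
  qed
qed

end




locale ectx = tctx +
  fixes eps :: "'a set \<Rightarrow> real" and rho :: "'a set \<Rightarrow> nat"
  assumes ebd: "equal_branching_density V E r eps"
begin

lemma eps_nonneg: "e \<in> E \<Longrightarrow> eps e \<ge> 0"
  using ebd by (auto simp: equal_branching_density_def hider_strategy_def)

lemma eps_sum: "(\<Sum>e\<in>E. eps e) = 1"
  using ebd by (auto simp: equal_branching_density_def hider_strategy_def)

lemma eps_nonleaf: "e \<in> E \<Longrightarrow> \<not> leaf e \<Longrightarrow> eps e = 0"
  using ebd by (auto simp: equal_branching_density_def)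

definition mass where "mass X = (\<Sum>l\<in>X. eps l)"

lemma ratio: assumes v: "v \<in> V" and f1: "f1 \<in> out v" and f2: "f2 \<in> out v"
  shows "mass (B f1) / real (card (B f1)) = mass (B f2) / real (card (B f2))"
proof (cases "f1 = f2")
  case False
  have "{f1, f2} \<subseteq> out v" using f1 f2 by simp
  then have "card {f1, f2} \<le> card (out v)" by (rule card_mono[OF fin_out])
  then have "card (out v) \<ge> 2" using False by simp
  then show ?thesis using ebd v f1 f2 unfolding equal_branching_density_def mass_def by blast
qed simp

definition lvs where "lvs f = {l \<in> B f. leaf l}"
definition phi where "phi f = Min (rho ` lvs f)"

lemma lvs_fin: "f \<in> E \<Longrightarrow> finite (lvs f)"
  unfolding lvs_def using fin_B by auto

lemma lvs_ne: "f \<in> E \<Longrightarrow> lvs f \<noteq> {}"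
  unfolding lvs_def using leaf_exists by blast

lemma phi_le: "f \<in> E \<Longrightarrow> l \<in> B f \<Longrightarrow> leaf l \<Longrightarrow> phi f \<le> rho l"
  unfolding phi_def using lvs_fin by (auto simp: lvs_def intro!: Min_le)

lemma phi_ex: assumes "f \<in> E" shows "\<exists>l. l \<in> B f \<and> leaf l \<and> rho l = phi f"
proof -
  have "phi f \<in> rho ` lvs f" unfolding phi_def using lvs_fin[OF assms] lvs_ne[OF assms] by (intro Min_in) auto
  then show ?thesis by (auto simp: lvs_def)
qed

lemma phi_leaf: assumes "g \<in> E" "leaf g" shows "phi g = rho g"
proof -
  have "lvs g = {g}" using leaf_B[OF assms] assms(2) by (auto simp: lvs_def)
  then show ?thesis by (simp add: phi_def)
qed

definition cnt where "cnt X t = (\<Sum>f\<in>X. if phi f < t then 1 else 0 :: real)"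
definition pm where "pm X t = (\<Sum>l\<in>X. if rho l < t then eps l else 0)"
definition ac where "ac X l = (\<Sum>f\<in>X. if l \<in> B f then 1 else 0 :: real)"
definition Phi where "Phi X = (\<Sum>l\<in>X. eps l * (2 * cnt X (Suc (rho l)) - ac X l))"
definition goodc where "goodc c X \<longleftrightarrow> mass X = c * real (card X) \<and> (\<forall>t. pm X t \<le> c * cnt X t)
     \<and> c * real (card X) ^ 2 \<le> Phi X"
definition closedB where "closedB X \<longleftrightarrow> finite X \<and> X \<subseteq> E \<and> (\<forall>f\<in>X. B f \<subseteq> X)"

lemma cross_bound:
  assumes X: "finite X" "X \<subseteq> E" and Y: "finite Y"
    and pre: "\<forall>t. pm X t \<le> c * cnt X t" and ms: "mass X = c * real (card X)"
  shows "c * (\<Sum>f\<in>Y. \<Sum>g\<in>X. if phi g < phi f then 0 else 1) \<le> (\<Sum>l\<in>X. eps l * cnt Y (Suc (rho l)))"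
proof -
  have "(\<Sum>l\<in>X. eps l * cnt Y (Suc (rho l))) = (\<Sum>l\<in>X. \<Sum>f\<in>Y. if phi f < Suc (rho l) then eps l else 0)"
    unfolding cnt_def by (simp add: sum_distrib_left if_distrib cong: if_cong)
  also have "\<dots> = (\<Sum>f\<in>Y. \<Sum>l\<in>X. if phi f < Suc (rho l) then eps l else 0)"
    by (rule sum.swap)
  also have "\<dots> = (\<Sum>f\<in>Y. mass X - pm X (phi f))"
  proof (rule sum.cong[OF refl])
    fix f assume "f \<in> Y"
    have "(\<Sum>l\<in>X. if phi f < Suc (rho l) then eps l else 0) = (\<Sum>l\<in>X. eps l - (if rho l < phi f then eps l else 0))"
      by (rule sum.cong) auto
    also have "\<dots> = mass X - pm X (phi f)" unfolding mass_def pm_def by (simp add: sum_subtractf)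
    finally show "(\<Sum>l\<in>X. if phi f < Suc (rho l) then eps l else 0) = mass X - pm X (phi f)" .
  qed
  finally have eq: "(\<Sum>l\<in>X. eps l * cnt Y (Suc (rho l))) = (\<Sum>f\<in>Y. mass X - pm X (phi f))" .
  have "(\<Sum>f\<in>Y. c * real (card X) - c * cnt X (phi f)) \<le> (\<Sum>f\<in>Y. mass X - pm X (phi f))"
    using pre ms by (intro sum_mono) auto
  moreover have "(\<Sum>f\<in>Y. c * real (card X) - c * cnt X (phi f)) = c * (\<Sum>f\<in>Y. \<Sum>g\<in>X. if phi g < phi f then 0 else 1)"
  proof -
    have "\<And>f. c * real (card X) - c * cnt X (phi f) = c * (\<Sum>g\<in>X. if phi g < phi f then 0 else 1)"
    proof -
      fix f
      have "(\<Sum>g\<in>X. if phi g < phi f then 0 else 1) = (\<Sum>g\<in>X. 1 - (if phi g < phi f then 1 else 0 :: real))"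
        by (rule sum.cong) auto
      also have "\<dots> = real (card X) - cnt X (phi f)" unfolding cnt_def by (simp add: sum_subtractf)
      finally show "c * real (card X) - c * cnt X (phi f) = c * (\<Sum>g\<in>X. if phi g < phi f then 0 else 1)"
        by (simp add: right_diff_distrib)
    qed
    then show ?thesis by (simp add: sum_distrib_left)
  qed
  ultimately show ?thesis using eq by simp
qed

lemma mass_nonneg: "X \<subseteq> E \<Longrightarrow> mass X \<ge> 0"
  unfolding mass_def using eps_nonneg by (auto intro: sum_nonneg)

lemma pm_le_mass: "X \<subseteq> E \<Longrightarrow> pm X t \<le> mass X"
  unfolding mass_def pm_def using eps_nonneg by (auto intro!: sum_mono)

lemma pm_nonneg: "X \<subseteq> E \<Longrightarrow> pm X t \<ge> 0"
  unfolding pm_def using eps_nonneg by (auto intro!: sum_nonneg)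

lemma merge:
  assumes cX: "closedB X" and cY: "closedB Y" and dis: "X \<inter> Y = {}"
    and gX: "goodc c X" and gY: "goodc c Y" and c: "c \<ge> 0"
  shows "closedB (X \<union> Y)" "goodc c (X \<union> Y)"
proof -
  have fX: "finite X" "X \<subseteq> E" "\<forall>f\<in>X. B f \<subseteq> X" and fY: "finite Y" "Y \<subseteq> E" "\<forall>f\<in>Y. B f \<subseteq> Y"
    using cX cY by (auto simp: closedB_def)
  show "closedB (X \<union> Y)" using fX fY by (auto simp: closedB_def)
  have mX: "mass X = c * real (card X)" and pX: "\<forall>t. pm X t \<le> c * cnt X t" and PX: "c * real (card X) ^ 2 \<le> Phi X"
    using gX by (auto simp: goodc_def)
  have mY: "mass Y = c * real (card Y)" and pY: "\<forall>t. pm Y t \<le> c * cnt Y t" and PY: "c * real (card Y) ^ 2 \<le> Phi Y"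
    using gY by (auto simp: goodc_def)
  have card: "card (X \<union> Y) = card X + card Y" using card_Un_disjoint fX fY dis by blast
  have mass: "mass (X \<union> Y) = mass X + mass Y" unfolding mass_def using sum.union_disjoint fX fY dis by blast
  have cntU: "cnt (X \<union> Y) t = cnt X t + cnt Y t" for t unfolding cnt_def using sum.union_disjoint fX fY dis by blast
  have pmU: "pm (X \<union> Y) t = pm X t + pm Y t" for t unfolding pm_def using sum.union_disjoint fX fY dis by blast
  have acU: "ac (X \<union> Y) l = ac X l + ac Y l" for l unfolding ac_def using sum.union_disjoint fX fY dis by blast
  have acYX: "ac Y l = 0" if "l \<in> X" for l
  proof -
    have "\<forall>f\<in>Y. l \<notin> B f" using fY(3) that dis by blast
    then show ?thesis unfolding ac_def by simp
  qed
  have acXY: "ac X l = 0" if "l \<in> Y" for l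
  proof -
    have "\<forall>f\<in>X. l \<notin> B f" using fX(3) that dis by blast
    then show ?thesis unfolding ac_def by simp
  qed
  define SX where "SX = (\<Sum>l\<in>X. eps l * cnt Y (Suc (rho l)))"
  define SY where "SY = (\<Sum>l\<in>Y. eps l * cnt X (Suc (rho l)))"
  have PhiU: "Phi (X \<union> Y) = Phi X + Phi Y + 2 * SX + 2 * SY"
  proof -
    have "Phi (X \<union> Y) = (\<Sum>l\<in>X. eps l * (2 * cnt (X \<union> Y) (Suc (rho l)) - ac (X \<union> Y) l))
        + (\<Sum>l\<in>Y. eps l * (2 * cnt (X \<union> Y) (Suc (rho l)) - ac (X \<union> Y) l))"
      unfolding Phi_def using sum.union_disjoint fX fY dis by blast
    also have "(\<Sum>l\<in>X. eps l * (2 * cnt (X \<union> Y) (Suc (rho l)) - ac (X \<union> Y) l))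
        = (\<Sum>l\<in>X. eps l * (2 * cnt X (Suc (rho l)) - ac X l) + 2 * (eps l * cnt Y (Suc (rho l))))"
      by (rule sum.cong) (auto simp: cntU acU acYX algebra_simps)
    also have "\<dots> = Phi X + 2 * SX" unfolding Phi_def SX_def by (simp add: sum.distrib sum_distrib_left)
    also have "(\<Sum>l\<in>Y. eps l * (2 * cnt (X \<union> Y) (Suc (rho l)) - ac (X \<union> Y) l))
        = (\<Sum>l\<in>Y. eps l * (2 * cnt Y (Suc (rho l)) - ac Y l) + 2 * (eps l * cnt X (Suc (rho l))))"
      by (rule sum.cong) (auto simp: cntU acU acXY algebra_simps)
    also have "\<dots> = Phi Y + 2 * SY" unfolding Phi_def SY_def by (simp add: sum.distrib sum_distrib_left)
    finally show ?thesis by simp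
  qed
  have c1: "c * (\<Sum>f\<in>Y. \<Sum>g\<in>X. if phi g < phi f then 0 else 1) \<le> SX"
    unfolding SX_def by (rule cross_bound[OF fX(1,2) fY(1) pX mX])
  have c2: "c * (\<Sum>g\<in>X. \<Sum>f\<in>Y. if phi f < phi g then 0 else 1) \<le> SY"
    unfolding SY_def by (rule cross_bound[OF fY(1,2) fX(1) pY mY])
  have pairs: "real (card X) * real (card Y) \<le> (\<Sum>f\<in>Y. \<Sum>g\<in>X. if phi g < phi f then 0 else 1)
      + (\<Sum>g\<in>X. \<Sum>f\<in>Y. if phi f < phi g then 0 else 1 :: real)"
  proof -
    have "(\<Sum>f\<in>Y. \<Sum>g\<in>X. if phi g < phi f then 0 else 1 :: real) = (\<Sum>g\<in>X. \<Sum>f\<in>Y. if phi g < phi f then 0 else 1)"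
      by (rule sum.swap)
    then have "(\<Sum>f\<in>Y. \<Sum>g\<in>X. if phi g < phi f then 0 else 1)
      + (\<Sum>g\<in>X. \<Sum>f\<in>Y. if phi f < phi g then 0 else 1 :: real)
      = (\<Sum>g\<in>X. \<Sum>f\<in>Y. (if phi g < phi f then 0 else 1) + (if phi f < phi g then 0 else 1))"
      by (simp add: sum.distrib)
    moreover have "(\<Sum>g\<in>X. \<Sum>f\<in>Y. (1::real)) \<le> (\<Sum>g\<in>X. \<Sum>f\<in>Y. (if phi g < phi f then 0 else 1) + (if phi f < phi g then 0 else 1))"
      by (intro sum_mono) auto
    ultimately show ?thesis by simp
  qed
  have "c * real (card (X \<union> Y)) ^ 2 = c * real (card X) ^ 2 + c * real (card Y) ^ 2 + 2 * (c * (real (card X) * real (card Y)))"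
    unfolding card by (simp add: power2_eq_square algebra_simps)
  also have "\<dots> \<le> Phi X + Phi Y + 2 * SX + 2 * SY"
  proof -
    have "c * (real (card X) * real (card Y)) \<le> SX + SY"
      using mult_left_mono[OF pairs c] c1 c2 by (simp add: algebra_simps)
    then show ?thesis using PX PY by simp
  qed
  finally have "c * real (card (X \<union> Y)) ^ 2 \<le> Phi (X \<union> Y)" using PhiU by simp
  moreover have "mass (X \<union> Y) = c * real (card (X \<union> Y))" using mass mX mY card by (simp add: algebra_simps)
  moreover have "\<forall>t. pm (X \<union> Y) t \<le> c * cnt (X \<union> Y) t" using pX pY pmU cntU by (simp add: algebra_simps add_mono)
  ultimately show "goodc c (X \<union> Y)" by (simp add: goodc_def)
qed

end




context ectx
begin

lemma closedB_B: "f \<in> E \<Longrightarrow> closedB (B f)"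
  unfolding closedB_def using fin_B B_sub_E B_trans by blast

lemma leaf_good: assumes g: "g \<in> E" "leaf g"
  shows "goodc (mass (B g) / real (card (B g))) (B g)"
proof -
  have Bg: "B g = {g}" by (rule leaf_B[OF g])
  have ph: "phi g = rho g" by (rule phi_leaf[OF g])
  have m: "mass {g} = eps g" by (simp add: mass_def)
  have "pm {g} t \<le> eps g * cnt {g} t" for t
    unfolding pm_def cnt_def using ph by simp
  moreover have "eps g * real (card {g}) ^ 2 \<le> Phi {g}"
    unfolding Phi_def cnt_def ac_def using ph B_self[of g] by simp
  ultimately show ?thesis unfolding Bg goodc_def m by simp
qed

lemma empty_good: "closedB {} \<and> goodc c {}"
  by (simp add: closedB_def goodc_def mass_def pm_def cnt_def Phi_def)

lemma vertex_good:
  assumes c: "c \<ge> 0" and g: "\<forall>f\<in>out v. goodc c (B f)"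
  shows "closedB (\<Union>(B ` out v)) \<and> goodc c (\<Union>(B ` out v))"
proof -
  have "finite F \<Longrightarrow> F \<subseteq> out v \<Longrightarrow> closedB (\<Union>(B ` F)) \<and> goodc c (\<Union>(B ` F))" for F
  proof (induction F rule: finite_induct)
    case empty then show ?case using empty_good by simp
  next
    case (insert f F)
    have fo: "f \<in> out v" using insert(4) by simp
    have fE: "f \<in> E" using fo out_iff by auto
    have dis: "B f \<inter> \<Union>(B ` F) = {}" using sib_disj[OF fo] insert(2,4) by blast
    have eq: "\<Union>(B ` insert f F) = B f \<union> \<Union>(B ` F)" by simp
    have IH: "closedB (\<Union>(B ` F)) \<and> goodc c (\<Union>(B ` F))" using insert(3,4) by simp
    show ?case unfolding eq
      using merge[OF closedB_B[OF fE] _ dis _ _ c] IH g fo by blast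
  qed
  then show ?thesis using fin_out by blast
qed

lemma edge_step:
  assumes g: "g \<in> E" "\<not> leaf g" and cU: "closedB (\<Union>(B ` out (hd_of g)))"
    and gU: "goodc c (\<Union>(B ` out (hd_of g)))" and c: "c \<ge> 0"
  shows "goodc (mass (B g) / real (card (B g))) (B g)"
proof -
  define U where "U = \<Union>(B ` out (hd_of g))"
  have BU: "B g = insert g U" "g \<notin> U" using B_decomp[OF g(1)] unfolding U_def by auto
  have fU: "finite U" "U \<subseteq> E" using cU unfolding closedB_def U_def by auto
  have eg: "eps g = 0" using eps_nonleaf g by blast
  have cardB: "card (B g) = card U + 1" using BU fU by simp
  have massB: "mass (B g) = mass U" using BU fU eg by (simp add: mass_def)
  have mU: "mass U = c * real (card U)" and pU: "\<forall>t. pm U t \<le> c * cnt U t" and PU: "c * real (card U) ^ 2 \<le> Phi U"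
    using gU unfolding goodc_def U_def by auto
  define c' where "c' = mass U / (real (card U) + 1)"
  have c'0: "c' \<ge> 0" unfolding c'_def using mass_nonneg[OF fU(2)] by simp
  have nz: "real (card U) + 1 > 0" by (simp add: add_pos_nonneg)
  have mB: "mass (B g) = c' * real (card (B g))" unfolding c'_def massB cardB using nz by (simp add: field_simps)
  have pmB: "pm (B g) t = pm U t" for t using BU fU eg by (simp add: pm_def)
  have cntB: "cnt (B g) t = (if phi g < t then 1 else 0) + cnt U t" for t using BU fU by (simp add: cnt_def)
  have cnt0: "cnt U t \<ge> 0" for t unfolding cnt_def by (auto intro: sum_nonneg)
  have pre: "pm (B g) t \<le> c' * cnt (B g) t" for t
  proof (cases "\<exists>l\<in>U. rho l < t \<and> eps l \<noteq> 0")
    case True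
    then obtain l where l: "l \<in> U" "rho l < t" "eps l \<noteq> 0" by blast
    have "leaf l" using l eps_nonleaf fU by blast
    moreover have "l \<in> B g" using l BU by blast
    ultimately have "phi g \<le> rho l" using phi_le[OF g(1)] by blast
    then have cB: "cnt (B g) t = 1 + cnt U t" using cntB l(2) by simp
    have "pm U t * real (card U) \<le> c * cnt U t * real (card U)"
      using pU by (simp add: mult_right_mono)
    also have "\<dots> = mass U * cnt U t" using mU by simp
    finally have "pm U t * (real (card U) + 1) \<le> mass U * (1 + cnt U t)"
      using pm_le_mass[OF fU(2), of t] by (simp add: algebra_simps)
    then have "pm U t \<le> mass U * (1 + cnt U t) / (real (card U) + 1)"
      by (simp add: field_simps)
    then show ?thesis unfolding pmB cB c'_def by simp
  next
    case False
    then have "pm U t = 0" unfolding pm_def by (intro sum.neutral) auto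
    moreover have "c' * cnt (B g) t \<ge> 0" using c'0 cntB cnt0 by simp
    ultimately show ?thesis using pmB by simp
  qed
  have acB: "ac (B g) l = 1 + ac U l" if "l \<in> U" for l
    using BU fU that by (simp add: ac_def)
  have PhiB: "Phi (B g) = Phi U + mass U"
  proof -
    have "Phi (B g) = eps g * (2 * cnt (B g) (Suc (rho g)) - ac (B g) g)
        + (\<Sum>l\<in>U. eps l * (2 * cnt (B g) (Suc (rho l)) - ac (B g) l))"
      unfolding Phi_def using BU fU by simp
    also have "\<dots> = (\<Sum>l\<in>U. eps l * (2 * cnt U (Suc (rho l)) - ac U l) + eps l)"
    proof -
      have "eps l * (2 * cnt (B g) (Suc (rho l)) - ac (B g) l) = eps l * (2 * cnt U (Suc (rho l)) - ac U l) + eps l"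
        if l: "l \<in> U" for l
      proof (cases "eps l = 0")
        case False
        have "leaf l" using l False eps_nonleaf fU by blast
        moreover have "l \<in> B g" using l BU by blast
        ultimately have "phi g \<le> rho l" using phi_le[OF g(1)] by blast
        then have "cnt (B g) (Suc (rho l)) = 1 + cnt U (Suc (rho l))" using cntB by simp
        then show ?thesis using acB[OF l] by (simp add: algebra_simps)
      qed simp
      then have "(\<Sum>l\<in>U. eps l * (2 * cnt (B g) (Suc (rho l)) - ac (B g) l)) = (\<Sum>l\<in>U. eps l * (2 * cnt U (Suc (rho l)) - ac U l) + eps l)"
        by (intro sum.cong) auto
      then show ?thesis using eg by simp
    qed
    also have "\<dots> = Phi U + mass U" unfolding Phi_def mass_def by (simp add: sum.distrib)
    finally show ?thesis .
  qed
  have "c' * real (card (B g)) ^ 2 = mass U * (real (card U) + 1)"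
    unfolding c'_def cardB by (simp add: power2_eq_square field_simps)
  also have "\<dots> = c * real (card U) ^ 2 + mass U" using mU by (simp add: power2_eq_square algebra_simps)
  also have "\<dots> \<le> Phi (B g)" using PU PhiB by simp
  finally have P: "c' * real (card (B g)) ^ 2 \<le> Phi (B g)" .
  have c'eq: "mass (B g) / real (card (B g)) = c'" using mB cardB by simp
  show ?thesis unfolding c'eq goodc_def using mB pre P by blast
qed

lemma all_good: "g \<in> E \<Longrightarrow> goodc (mass (B g) / real (card (B g))) (B g)"
proof (induction "card (B g)" arbitrary: g rule: less_induct)
  case less
  show ?case
  proof (cases "leaf g")
    case True then show ?thesis using leaf_good less(2) by blast
  next
    case False
    define v where "v = hd_of g"
    have vV: "v \<in> V" using hd_in[OF less(2)] less(2) E_sub unfolding v_def by blast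
    obtain f0 where f0: "f0 \<in> out v" using False leaf_iff unfolding v_def by blast
    define c where "c = mass (B f0) / real (card (B f0))"
    have f0E: "f0 \<in> E" using f0 out_iff by auto
    have c0: "c \<ge> 0" unfolding c_def using mass_nonneg B_sub_E[OF f0E] by simp
    have "goodc c (B f)" if f: "f \<in> out v" for f
    proof -
      have "c = mass (B f) / real (card (B f))" unfolding c_def by (rule ratio[OF vV f0 f])
      moreover have "f \<in> E" using f out_iff by auto
      ultimately show ?thesis using less(1)[OF card_child[OF less(2)]] f unfolding v_def by simp
    qed
    then have "closedB (\<Union>(B ` out v)) \<and> goodc c (\<Union>(B ` out v))" using vertex_good c0 by blast
    then show ?thesis using edge_step[OF less(2) False _ _ c0] unfolding v_def by blast
  qed
qed

lemma Phi_E: assumes "E \<noteq> {}" shows "real (card E) \<le> Phi E"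
proof -
  obtain e where "e \<in> E" using assms by blast
  then obtain f0 where f0: "f0 \<in> out r" using cover_r by blast
  define c where "c = mass (B f0) / real (card (B f0))"
  have f0E: "f0 \<in> E" using f0 out_iff by auto
  have c0: "c \<ge> 0" unfolding c_def using mass_nonneg B_sub_E[OF f0E] by simp
  have "goodc c (B f)" if f: "f \<in> out r" for f
  proof -
    have "c = mass (B f) / real (card (B f))" unfolding c_def by (rule ratio[OF rV f0 f])
    moreover have "f \<in> E" using f out_iff by auto
    ultimately show ?thesis using all_good f by simp
  qed
  then have "goodc c (\<Union>(B ` out r))" using vertex_good c0 by blast
  then have g: "goodc c E" using E_decomp by simp
  then have "c * real (card E) = 1" using eps_sum unfolding goodc_def mass_def by simp
  moreover have "c * real (card E) ^ 2 \<le> Phi E" using g unfolding goodc_def by simp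
  moreover have "c * real (card E) ^ 2 = (c * real (card E)) * real (card E)" by (simp add: power2_eq_square)
  ultimately show ?thesis by simp
qed

end




context gctx
begin

definition cntw :: "(nat \<Rightarrow> 'a) \<Rightarrow> 'a set \<Rightarrow> nat \<Rightarrow> nat" where
  "cntw w f t = card {s. s < t \<and> traverses_at w f s}"

lemma cntw_0: "cntw w f 0 = 0" by (simp add: cntw_def)

lemma cntw_Suc: "cntw w f (Suc t) = cntw w f t + (if traverses_at w f t then 1 else 0)"
proof (cases "traverses_at w f t")
  case True
  have "{s. s < Suc t \<and> traverses_at w f s} = insert t {s. s < t \<and> traverses_at w f s}"
    using True by (auto simp: less_Suc_eq)
  then show ?thesis using True by (simp add: cntw_def)
next
  case False
  have "{s. s < Suc t \<and> traverses_at w f s} = {s. s < t \<and> traverses_at w f s}"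
    using False by (auto simp: less_Suc_eq)
  then show ?thesis using False by (simp add: cntw_def)
qed

lemma cntw_mono: "t \<le> t' \<Longrightarrow> cntw w f t \<le> cntw w f t'"
  unfolding cntw_def by (rule card_mono) auto

lemma sum_cntw: "finite S \<Longrightarrow> (\<Sum>f\<in>S. cntw w f t) \<le> t"
proof -
  assume fS: "finite S"
  have "(\<Sum>f\<in>S. cntw w f t) = card (\<Union>f\<in>S. {s. s < t \<and> traverses_at w f s})"
    unfolding cntw_def
    by (rule card_UN_disjoint[symmetric]) (use fS in \<open>auto simp: traverses_at_def\<close>)
  also have "\<dots> \<le> card {..<t}" by (rule card_mono) auto
  finally show ?thesis by simp
qed

definition found where "found w e \<longleftrightarrow> (\<exists>t. traverses_at w e t)"
definition fi where "fi w e = (LEAST t. traverses_at w e t)"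

lemma fi_trav: "found w e \<Longrightarrow> traverses_at w e (fi w e)"
  unfolding found_def fi_def by (metis LeastI)

lemma fi_least: "traverses_at w e t \<Longrightarrow> fi w e \<le> t"
  unfolding fi_def by (rule Least_le)

lemma cntw_fi: "found w e \<Longrightarrow> cntw w e (fi w e) = 0"
proof -
  assume "found w e"
  have "{s. s < fi w e \<and> traverses_at w e s} = {}" using fi_least by force
  then show ?thesis by (simp add: cntw_def)
qed

lemma hit_found: "found w e \<Longrightarrow> hit_time w e = of_nat (Suc (fi w e))"
  by (simp add: hit_time_def found_def fi_def)

lemma hit_nfound: "\<not> found w e \<Longrightarrow> hit_time w e = \<infinity>"
  by (simp add: hit_time_def found_def)

definition Kw where "Kw w = Suc (Max (insert 0 (fi w ` {e\<in>E. found w e})))"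

lemma fi_lt_K: "e \<in> E \<Longrightarrow> found w e \<Longrightarrow> fi w e < Kw w"
proof -
  assume "e \<in> E" "found w e"
  then have "fi w e \<in> insert 0 (fi w ` {e\<in>E. found w e})" by blast
  moreover have "finite (insert 0 (fi w ` {e\<in>E. found w e}))" using finE by simp
  ultimately have "fi w e \<le> Max (insert 0 (fi w ` {e\<in>E. found w e}))" by (rule Max_ge[rotated])
  then show ?thesis by (simp add: Kw_def)
qed

definition rhow where "rhow w e = (if found w e then fi w e else Kw w)"

end

context tctx
begin

lemma trav_mem: "traverses_at w f t \<Longrightarrow> w t \<in> f \<and> w (Suc t) \<in> f \<and> w t \<noteq> w (Suc t)"
  by (auto simp: traverses_at_def)

lemma flip: assumes f: "f \<in> E" and x: "x \<in> f" and y: "y \<in> f" and xy: "x \<noteq> y"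
  shows "x \<in> R f \<longleftrightarrow> y \<notin> R f"
proof -
  have "x = tl_of f \<or> x = hd_of f" "y = tl_of f \<or> y = hd_of f" using x y edge_mem[OF f] by blast+
  then show ?thesis using xy edge_split[OF f] by auto
qed

lemma parity: assumes wk: "walk E r w" and f: "f \<in> E"
  shows "odd (cntw w f t) \<longleftrightarrow> w t \<notin> R f"
proof (induction t)
  case 0
  have "w 0 = r" using wk by (simp add: walk_def)
  then show ?case using r_R by (simp add: cntw_0)
next
  case (Suc t)
  have st: "w (Suc t) = w t \<or> {w t, w (Suc t)} \<in> E" using wk by (simp add: walk_def)
  show ?case
  proof (cases "traverses_at w f t")
    case True
    have "w t \<in> f" "w (Suc t) \<in> f" "w t \<noteq> w (Suc t)" using trav_mem[OF True] by auto
    then have "w t \<in> R f \<longleftrightarrow> w (Suc t) \<notin> R f" using flip[OF f] by blast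
    then show ?thesis using Suc True by (simp add: cntw_Suc)
  next
    case False
    have "w (Suc t) \<in> R f \<longleftrightarrow> w t \<in> R f"
    proof (cases "w (Suc t) = w t")
      case False
      then have e: "{w t, w (Suc t)} \<in> E" using st by simp
      have "{w t, w (Suc t)} \<noteq> f" using \<open>\<not> traverses_at w f t\<close> False by (auto simp: traverses_at_def)
      then show ?thesis using side[OF e] by blast
    qed simp
    then show ?thesis using Suc False by (simp add: cntw_Suc)
  qed
qed

lemma arrive: assumes wk: "walk E r w" and l: "l \<in> E" and fo: "found w l"
  shows "w (Suc (fi w l)) = hd_of l"
proof -
  have tr: "traverses_at w l (fi w l)" by (rule fi_trav[OF fo])
  have "cntw w l (Suc (fi w l)) = 1" using cntw_fi[OF fo] tr by (simp add: cntw_Suc)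
  then have "w (Suc (fi w l)) \<notin> R l" using parity[OF wk l, of "Suc (fi w l)"] by simp
  moreover have "w (Suc (fi w l)) \<in> l" using trav_mem[OF tr] by simp
  ultimately show ?thesis using in_edge_nR[OF l] by blast
qed

end

locale wctx = tctx +
  fixes eps :: "'a set \<Rightarrow> real" and w :: "nat \<Rightarrow> 'a"
  assumes ebd: "equal_branching_density V E r eps" and wk: "walk E r w"

sublocale wctx \<subseteq> ectx V E r eps "rhow w"
  by unfold_locales (rule ebd)

context wctx
begin

lemma step1: assumes l: "l \<in> E" "leaf l" and fo: "found w l"
  shows "2 * cnt E (Suc (rhow w l)) - ac E l \<le> real (Suc (fi w l))"
proof -
  define i where "i = fi w l"
  have rl: "rhow w l = i" using fo by (simp add: rhow_def i_def)
  have wH: "w (Suc i) = hd_of l" unfolding i_def by (rule arrive[OF wk l(1) fo])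
  define b where "b f = (if phi f < Suc i then (if l \<in> B f then 1 else 2) else 0 :: nat)" for f
  have bnd: "b f \<le> cntw w f (Suc i)" if f: "f \<in> E" for f
  proof (cases "phi f < Suc i")
    case True
    obtain l' where l': "l' \<in> B f" "leaf l'" "rhow w l' = phi f" using phi_ex[OF f] by blast
    have l'E: "l' \<in> E" using l' B_sub_E[OF f] by blast
    have "found w l'"
    proof (rule ccontr)
      assume "\<not> found w l'"
      then have "rhow w l' = Kw w" by (simp add: rhow_def)
      moreover have "i < Kw w" unfolding i_def by (rule fi_lt_K[OF l(1) fo])
      ultimately show False using l'(3) True by simp
    qed
    then have fl': "fi w l' \<le> i" using l'(3) True by (simp add: rhow_def)
    have "w (Suc (fi w l')) = hd_of l'" by (rule arrive[OF wk l'E \<open>found w l'\<close>])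
    moreover have "hd_of l' \<notin> R f" using B_iff_hd[OF l'E f] l'(1) by simp
    ultimately have "odd (cntw w f (Suc (fi w l')))" using parity[OF wk f] by simp
    then have "cntw w f (Suc (fi w l')) \<ge> 1" by (cases "cntw w f (Suc (fi w l'))") auto
    then have c1: "cntw w f (Suc i) \<ge> 1" using cntw_mono[of "Suc (fi w l')" "Suc i" w f] fl' by simp
    show ?thesis
    proof (cases "l \<in> B f")
      case True
      then show ?thesis using c1 \<open>phi f < Suc i\<close> by (simp add: b_def)
    next
      case False
      have "hd_of l \<in> R f" using B_iff_hd[OF l(1) f] False by simp
      then have "even (cntw w f (Suc i))" using parity[OF wk f, of "Suc i"] wH by simp
      then have "cntw w f (Suc i) \<noteq> 1" by (metis odd_one)
      then have "cntw w f (Suc i) \<ge> 2" using c1 by linarith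
      then show ?thesis using False \<open>phi f < Suc i\<close> by (simp add: b_def)
    qed
  next
    case False
    then show ?thesis by (simp add: b_def)
  qed
  have "(\<Sum>f\<in>E. b f) \<le> (\<Sum>f\<in>E. cntw w f (Suc i))" using bnd by (rule sum_mono)
  also have "\<dots> \<le> Suc i" using sum_cntw[OF finE] .
  finally have sb: "real (\<Sum>f\<in>E. b f) \<le> real (Suc i)" by linarith
  have "2 * cnt E (Suc (rhow w l)) - ac E l = (\<Sum>f\<in>E. 2 * (if phi f < Suc i then 1 else 0) - (if l \<in> B f then 1 else 0 :: real))"
    unfolding cnt_def ac_def rl by (simp add: sum_subtractf sum_distrib_left)
  also have "\<dots> \<le> (\<Sum>f\<in>E. real (b f))"
    by (rule sum_mono) (auto simp: b_def)
  also have "\<dots> = real (\<Sum>f\<in>E. b f)" by simp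
  finally show ?thesis using sb unfolding i_def by linarith
qed

lemma ac_le_cnt: assumes "l \<in> E" "leaf l" shows "ac E l \<le> cnt E (Suc (rhow w l))"
  unfolding ac_def cnt_def
proof (rule sum_mono)
  fix f assume f: "f \<in> E"
  show "(if l \<in> B f then 1 else 0) \<le> (if phi f < Suc (rhow w l) then 1 else 0 :: real)"
    using phi_le[OF f _ assms(2)] by auto
qed

lemma walk_lower: assumes ne: "E \<noteq> {}"
  shows "of_nat (card E) \<le> (\<Sum>e\<in>E. ennreal (eps e) * hit_time w e)"
proof (cases "\<exists>e\<in>E. eps e > 0 \<and> \<not> found w e")
  case True
  then obtain e where e: "e \<in> E" "eps e > 0" "\<not> found w e" by blast
  have "ennreal (eps e) * hit_time w e = \<infinity>" using e by (simp add: hit_nfound ennreal_mult_top)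
  moreover have "ennreal (eps e) * hit_time w e \<le> (\<Sum>e\<in>E. ennreal (eps e) * hit_time w e)"
    by (rule member_le_sum[OF e(1)]) (auto simp: finE)
  ultimately show ?thesis by (simp add: top_unique)
next
  case False
  define x where "x e = eps e * (2 * cnt E (Suc (rhow w e)) - ac E e)" for e
  have xge: "x e \<ge> 0" if e: "e \<in> E" for e
  proof (cases "leaf e")
    case True
    have c0: "0 \<le> cnt E (Suc (rhow w e))" unfolding cnt_def by (rule sum_nonneg) auto
    have "0 \<le> 2 * cnt E (Suc (rhow w e)) - ac E e" using ac_le_cnt[OF e True] c0 by linarith
    then show ?thesis using eps_nonneg[OF e] unfolding x_def by (rule mult_nonneg_nonneg[rotated])
  next
    case False then show ?thesis using eps_nonleaf[OF e] by (simp add: x_def)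
  qed
  have le: "ennreal (x e) \<le> ennreal (eps e) * hit_time w e" if e: "e \<in> E" for e
  proof (cases "eps e = 0")
    case True then show ?thesis by (simp add: x_def)
  next
    case nz: False
    then have pos: "eps e > 0" using eps_nonneg[OF e] by simp
    then have fo: "found w e" using False e by blast
    have lf: "leaf e" using eps_nonleaf[OF e] nz by blast
    have "x e \<le> eps e * real (Suc (fi w e))"
      unfolding x_def using step1[OF e lf fo] pos by (intro mult_left_mono) auto
    then have "ennreal (x e) \<le> ennreal (eps e * real (Suc (fi w e)))" by (rule ennreal_leI)
    also have "\<dots> = ennreal (eps e) * hit_time w e"
      using pos by (simp add: hit_found[OF fo] ennreal_mult ennreal_of_nat_eq_real_of_nat)
    finally show ?thesis .
  qed
  have "ennreal (Phi E) = (\<Sum>e\<in>E. ennreal (x e))"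
    unfolding Phi_def x_def using xge by (simp add: x_def)
  also have "\<dots> \<le> (\<Sum>e\<in>E. ennreal (eps e) * hit_time w e)" using le by (rule sum_mono)
  finally have "ennreal (Phi E) \<le> (\<Sum>e\<in>E. ennreal (eps e) * hit_time w e)" .
  moreover have "of_nat (card E) \<le> ennreal (Phi E)"
    using Phi_E[OF ne] by (simp add: ennreal_of_nat_eq_real_of_nat)
  ultimately show ?thesis by (rule order_trans[rotated])
qed

end




lemma ledges_app2: "xs \<noteq> [] \<Longrightarrow> ys \<noteq> [] \<Longrightarrow> ledges (xs @ ys) = ledges xs \<union> ledges ys \<union> {{last xs, hd ys}}"
proof (induction xs)
  case Nil then show ?case by simp
next
  case (Cons x xs)
  show ?case
  proof (cases "xs = []")
    case True
    then show ?thesis using Cons(3) by (simp add: ledges_Cons)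
  next
    case False
    have "ledges ((x # xs) @ ys) = insert {x, hd xs} (ledges (xs @ ys))"
      using False by (simp add: ledges_Cons)
    also have "\<dots> = insert {x, hd xs} (ledges xs \<union> ledges ys \<union> {{last xs, hd ys}})"
      using Cons False by simp
    also have "\<dots> = ledges (x # xs) \<union> ledges ys \<union> {{last (x # xs), hd ys}}"
      using False by (simp add: ledges_Cons insert_commute)
    finally show ?thesis .
  qed
qed

context gctx
begin

definition cw where "cw c xs \<longleftrightarrow> xs \<noteq> [] \<and> hd xs = c \<and> last xs = c \<and> ledges xs \<subseteq> E"

lemma ccw_iff: "closed_cover_walk E r xs \<longleftrightarrow> cw r xs \<and> E \<subseteq> ledges xs"
proof -
  have 1: "(\<forall>i. Suc i < length xs \<longrightarrow> {xs ! i, xs ! Suc i} \<in> E) \<longleftrightarrow> ledges xs \<subseteq> E"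
    unfolding ledges_nth by auto
  have 2: "(\<forall>e\<in>E. \<exists>i. Suc i < length xs \<and> {xs ! i, xs ! Suc i} = e) \<longleftrightarrow> E \<subseteq> ledges xs"
    unfolding ledges_nth by auto
  show ?thesis unfolding closed_cover_walk_def cw_def 1 2 by blast
qed

lemma adj_uncovered:
  assumes c: "c \<in> V" and Z: "cw c Z" and nc: "\<not> E \<subseteq> ledges Z"
  shows "\<exists>g\<in>E - ledges Z. \<exists>a\<in>g. a \<in> set Z"
proof -
  obtain g0 where g0: "g0 \<in> E" "g0 \<notin> ledges Z" using nc by blast
  obtain u v where uv: "g0 = {u,v}" "u \<noteq> v" "u \<in> V" "v \<in> V" by (rule edgeE[OF g0(1)])
  have "y \<in> set Z \<or> (\<exists>g\<in>E - ledges Z. \<exists>a\<in>g. a \<in> set Z)" if "(c,y) \<in> (adj E)\<^sup>*" for y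
    using that
  proof (induction rule: rtrancl_induct)
    case base
    have "Z \<noteq> []" "hd Z = c" using Z by (simp_all add: cw_def)
    then have "c \<in> set Z" using hd_in_set[of Z] by simp
    then show ?case by blast
  next
    case (step y z)
    have yz: "{y,z} \<in> E" using step(2) by (simp add: adj_def)
    from step(3) show ?case
    proof
      assume y: "y \<in> set Z"
      show ?thesis
      proof (cases "{y,z} \<in> ledges Z")
        case True
        have "z \<in> {y,z}" by simp
        with True have "z \<in> set Z" by (rule ledges_vert)
        then show ?thesis by blast
      next
        case False
        then show ?thesis using yz y by blast
      qed
    qed blast
  qed
  then have "u \<in> set Z \<or> (\<exists>g\<in>E - ledges Z. \<exists>a\<in>g. a \<in> set Z)" using conn'[OF c uv(3)] by blast
  moreover have "u \<in> g0" using uv(1) by simp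
  ultimately show ?thesis using g0(1,2) by blast
qed

lemma insert_detour:
  assumes Z: "cw c Z" and g: "g \<in> E" "a \<in> g" "a \<in> set Z"
  shows "\<exists>Z'. cw c Z' \<and> ledges Z' = insert g (ledges Z) \<and> length Z' = length Z + 2"
proof -
  obtain b where b: "g = {a,b}" "a \<noteq> b" using edge_other[OF g(1,2)] by blast
  obtain as bs where ab: "Z = as @ a # bs" using g(3) by (meson split_list)
  define Z' where "Z' = as @ a # b # a # bs"
  have le: "ledges Z' = ledges (as @ [a]) \<union> ledges (a # b # a # bs)"
    unfolding Z'_def by (rule ledges_append)
  have le2: "ledges Z = ledges (as @ [a]) \<union> ledges (a # bs)"
    unfolding ab by (rule ledges_append)
  have "ledges (a # b # a # bs) = insert {a,b} (ledges (a # bs))" by (auto simp: insert_commute)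
  then have eq: "ledges Z' = insert g (ledges Z)" using le le2 b(1) by auto
  have hd: "hd Z' = hd Z" unfolding Z'_def ab by (cases as) auto
  have lst: "last Z' = last Z" unfolding Z'_def ab by (cases bs) auto
  have "cw c Z'" using Z eq hd lst g(1) unfolding cw_def Z'_def by auto
  moreover have "length Z' = length Z + 2" unfolding Z'_def ab by simp
  ultimately show ?thesis using eq by blast
qed

lemma walk_exists:
  assumes c: "c \<in> V" and Z: "cw c Z"
  shows "\<exists>W. cw c W \<and> E \<subseteq> ledges W \<and> length W \<le> length Z + 2 * card (E - ledges Z)"
  using Z
proof (induction "card (E - ledges Z)" arbitrary: Z rule: less_induct)
  case less
  show ?case
  proof (cases "E \<subseteq> ledges Z")
    case True then show ?thesis using less(2) by auto
  next
    case False
    obtain g a where g: "g \<in> E - ledges Z" "a \<in> g" "a \<in> set Z" using adj_uncovered[OF c less(2) False] by blast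
    obtain Z' where Z': "cw c Z'" "ledges Z' = insert g (ledges Z)" "length Z' = length Z + 2"
      using insert_detour[OF less(2), of g a] g by blast
    have "E - ledges Z' = (E - ledges Z) - {g}" using Z'(2) by auto
    then have cd: "card (E - ledges Z') = card (E - ledges Z) - 1" using g(1) finE by simp
    have pos: "card (E - ledges Z) > 0" using g(1) finE by (auto simp: card_gt_0_iff)
    then obtain W where W: "cw c W" "E \<subseteq> ledges W" "length W \<le> length Z' + 2 * card (E - ledges Z')"
      using less(1)[OF _ Z'(1)] cd by auto
    then show ?thesis using Z'(3) cd pos by auto
  qed
qed

lemma cw_rev: "cw c xs \<Longrightarrow> cw c (rev xs)"
  unfolding cw_def by (simp add: ledges_rev hd_rev last_rev)

lemma rotate_walk:
  assumes W: "cw c W" and x: "x \<in> set W"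
  shows "\<exists>W'. cw x W' \<and> ledges W' = ledges W \<and> length W' = length W"
proof -
  obtain as bs where ab: "W = as @ x # bs" using x by (meson split_list)
  show ?thesis
  proof (cases "as = []")
    case True
    then have "hd W = x" using ab by simp
    then have "c = x" using W by (simp add: cw_def)
    then show ?thesis using W by blast
  next
    case False
    have hdas: "hd as = c" using W ab False by (simp add: cw_def)
    have lst: "last (x # bs) = c" using W ab by (simp add: cw_def)
    define W' where "W' = (x # bs) @ (tl as @ [x])"
    have e0: "ledges W' = ledges (x # bs) \<union> (ledges (tl as @ [x]) \<union> {{last (x # bs), hd (tl as @ [x])}})"
      unfolding W'_def using ledges_app2[of "x # bs" "tl as @ [x]"] by auto
    have e3: "ledges (tl as @ [x]) \<union> {{last (x # bs), hd (tl as @ [x])}} = ledges (c # tl as @ [x])"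
      unfolding lst by (simp add: ledges_Cons)
    have e4: "c # tl as @ [x] = as @ [x]" using hdas False by (cases as) simp_all
    have e1: "ledges W' = ledges (x # bs) \<union> ledges (as @ [x])" by (simp only: e0 e3 e4)
    have e2: "ledges W = ledges (as @ [x]) \<union> ledges (x # bs)" unfolding ab by (rule ledges_append)
    have "cw x W'" using W e1 e2 unfolding cw_def W'_def by auto
    moreover have "length W' = length W" unfolding W'_def ab using False by simp
    ultimately show ?thesis using e1 e2 by blast
  qed
qed

lemma cw_set_V: assumes "c \<in> V" "cw c xs" shows "set xs \<subseteq> V"
proof
  fix y assume "y \<in> set xs"
  then obtain k where k: "k < length xs" "xs ! k = y" by (meson in_set_conv_nth)
  show "y \<in> V"
  proof (cases k)
    case 0
    have "xs \<noteq> []" "hd xs = c" using assms(2) by (simp_all add: cw_def)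
    then have "xs ! 0 = c" by (simp add: hd_conv_nth)
    then show ?thesis using assms(1) k 0 by simp
  next
    case (Suc j)
    then have "{xs ! j, xs ! Suc j} \<in> ledges xs" using k unfolding ledges_nth by blast
    then have "{xs ! j, xs ! Suc j} \<in> E" using assms by (auto simp: cw_def)
    then show ?thesis using E_sub k Suc by blast
  qed
qed

lemma r_in_edge: assumes "E \<noteq> {}" shows "\<exists>e\<in>E. r \<in> e"
proof -
  obtain e where e: "e \<in> E" using assms by blast
  obtain a b where ab: "e = {a,b}" "a \<noteq> b" "a \<in> V" "b \<in> V" by (rule edgeE[OF e])
  show ?thesis
  proof (cases "a = r")
    case True then show ?thesis using e ab by blast
  next
    case False
    have "(r,a) \<in> (adj E)\<^sup>*" using conn'[OF rV ab(3)] .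
    then have "\<exists>y. (r,y) \<in> adj E"
    proof (cases rule: converse_rtranclE)
      case base then show ?thesis using False by simp
    next
      case (step y) then show ?thesis by blast
    qed
    then obtain y where "(r,y) \<in> adj E" by blast
    then have "{r,y} \<in> E" by (simp add: adj_def)
    then show ?thesis by blast
  qed
qed

end




context gctx
begin

lemma follow_lt: "t < length xs \<Longrightarrow> follow_tour r xs t = xs ! t"
  by (simp add: follow_tour_def)

lemma follow_ge: "length xs \<le> t \<Longrightarrow> follow_tour r xs t = r"
  by (simp add: follow_tour_def)

lemma last_nth': "xs \<noteq> [] \<Longrightarrow> xs ! (length xs - 1) = last xs"
  by (simp add: last_conv_nth)

lemma follow_end: assumes W: "cw r xs" and t: "\<not> Suc t < length xs"
  shows "follow_tour r xs t = r"
proof (cases "t < length xs")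
  case True
  then have "t = length xs - 1" using t by simp
  moreover have "xs \<noteq> []" "last xs = r" using W by (auto simp: cw_def)
  ultimately show ?thesis using True by (simp add: follow_lt last_conv_nth)
qed (simp add: follow_ge)

lemma trav_follow:
  assumes W: "cw r xs"
  shows "traverses_at (follow_tour r xs) e t \<longleftrightarrow> (Suc t < length xs \<and> xs ! t \<noteq> xs ! Suc t \<and> {xs ! t, xs ! Suc t} = e)"
proof (cases "Suc t < length xs")
  case True
  then show ?thesis by (simp add: traverses_at_def follow_lt)
next
  case False
  have "follow_tour r xs t = r" by (rule follow_end[OF W False])
  moreover have "follow_tour r xs (Suc t) = r" using False by (simp add: follow_ge)
  ultimately show ?thesis using False by (simp add: traverses_at_def)
qed

lemma walk_follow: assumes W: "cw r xs" shows "walk E r (follow_tour r xs)"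
proof -
  have ne: "xs \<noteq> []" and h: "hd xs = r" and le: "ledges xs \<subseteq> E" using W by (auto simp: cw_def)
  have "follow_tour r xs 0 = r" using ne h by (simp add: follow_lt hd_conv_nth)
  moreover have "follow_tour r xs (Suc t) = follow_tour r xs t \<or> {follow_tour r xs t, follow_tour r xs (Suc t)} \<in> E" for t
  proof (cases "Suc t < length xs")
    case True
    have "{xs ! t, xs ! Suc t} \<in> ledges xs" using True unfolding ledges_nth by blast
    then have "{xs ! t, xs ! Suc t} \<in> E" using le by blast
    then show ?thesis using True by (simp add: follow_lt)
  next
    case False
    have "follow_tour r xs t = r" by (rule follow_end[OF W False])
    moreover have "follow_tour r xs (Suc t) = r" using False by (simp add: follow_ge)
    ultimately show ?thesis by simp
  qed
  ultimately show ?thesis by (simp add: walk_def)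
qed

definition ltrav where "ltrav xs e i \<longleftrightarrow> Suc i < length xs \<and> xs ! i \<noteq> xs ! Suc i \<and> {xs ! i, xs ! Suc i} = e"

lemma ltrav_rev: assumes "ltrav xs e j" shows "ltrav (rev xs) e (length xs - 2 - j)"
proof -
  have j: "Suc j < length xs" "xs ! j \<noteq> xs ! Suc j" "{xs ! j, xs ! Suc j} = e" using assms by (auto simp: ltrav_def)
  define k where "k = length xs - 2 - j"
  have k1: "Suc k < length xs" using j(1) unfolding k_def by simp
  have "rev xs ! k = xs ! (length xs - Suc k)" using k1 by (simp add: rev_nth)
  moreover have "length xs - Suc k = Suc j" using j(1) unfolding k_def by simp
  moreover have "rev xs ! Suc k = xs ! (length xs - Suc (Suc k))" using k1 by (simp add: rev_nth)
  moreover have "length xs - Suc (Suc k) = j" using j(1) unfolding k_def by simp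
  ultimately have "rev xs ! k = xs ! Suc j" "rev xs ! Suc k = xs ! j" by simp_all
  then show ?thesis using j k1 unfolding ltrav_def k_def by (auto simp: insert_commute)
qed

lemma found_follow: assumes W: "cw r xs" and t: "ltrav xs e i"
  shows "found (follow_tour r xs) e" "fi (follow_tour r xs) e \<le> i"
proof -
  have "traverses_at (follow_tour r xs) e i" using trav_follow[OF W] t by (simp add: ltrav_def)
  then show "found (follow_tour r xs) e" "fi (follow_tour r xs) e \<le> i"
    by (auto simp: found_def intro: fi_least)
qed

lemma pair_bound: assumes W: "cw r xs" and i: "ltrav xs e i" and j: "ltrav xs e j"
  shows "Suc (fi (follow_tour r xs) e) + Suc (fi (follow_tour r (rev xs)) e) \<le> Suc i + (length xs - 1 - j)"
proof -
  have a: "fi (follow_tour r xs) e \<le> i" using found_follow[OF W i] by simp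
  have b: "fi (follow_tour r (rev xs)) e \<le> length xs - 2 - j"
    using found_follow[OF cw_rev[OF W] ltrav_rev[OF j]] by simp
  have "Suc j < length xs" using j by (simp add: ltrav_def)
  then show ?thesis using a b by linarith
qed

lemma ledges_ltrav: assumes "e \<in> E" "e \<in> ledges xs" shows "\<exists>i. ltrav xs e i"
proof -
  obtain i where i: "Suc i < length xs" "{xs ! i, xs ! Suc i} = e" using assms(2) unfolding ledges_nth by blast
  have "xs ! i \<noteq> xs ! Suc i" using edge_neq i(2) assms(1) by blast
  then show ?thesis using i by (auto simp: ltrav_def)
qed

definition sW where "sW W = map_pmf (\<lambda>b. follow_tour r (if b then W else rev W)) (pmf_of_set (UNIV :: bool set))"

lemma sW_strategy: "cw r W \<Longrightarrow> searcher_strategy E r (sW W)"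
  unfolding searcher_strategy_def sW_def using walk_follow cw_rev by auto

lemma sW_guar: assumes W: "cw r W" and cov: "E \<subseteq> ledges W"
  shows "searcher_guarantee E (sW W) \<le> ennreal (real (length W) / 2)"
  unfolding searcher_guarantee_def
proof (rule SUP_least)
  fix e assume e: "e \<in> E"
  obtain i where i: "ltrav W e i" using ledges_ltrav[OF e] cov e by blast
  have f1: "found (follow_tour r W) e" using found_follow[OF W i] by simp
  have f2: "found (follow_tour r (rev W)) e" using found_follow[OF cw_rev[OF W] ltrav_rev[OF i]] by simp
  have pb: "Suc (fi (follow_tour r W) e) + Suc (fi (follow_tour r (rev W)) e) \<le> length W"
    using pair_bound[OF W i i] i by (simp add: ltrav_def)
  have "(\<integral>\<^sup>+ w. hit_time w e \<partial>measure_pmf (sW W))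
      = (\<Sum>b\<in>UNIV. hit_time (follow_tour r (if b then W else rev W)) e) / of_nat (card (UNIV :: bool set))"
    unfolding sW_def by (simp add: nn_integral_pmf_of_set)
  also have "\<dots> = (of_nat (Suc (fi (follow_tour r W) e)) + of_nat (Suc (fi (follow_tour r (rev W)) e))) / 2"
    by (simp add: UNIV_bool hit_found[OF f1] hit_found[OF f2] add.commute)
  also have "\<dots> = of_nat (Suc (fi (follow_tour r W) e) + Suc (fi (follow_tour r (rev W)) e)) / 2"
    by (simp only: of_nat_add)
  also have "\<dots> = ennreal (real (Suc (fi (follow_tour r W) e) + Suc (fi (follow_tour r (rev W)) e))) / 2"
    by (simp only: ennreal_of_nat_eq_real_of_nat)
  also have "\<dots> = ennreal (real (Suc (fi (follow_tour r W) e) + Suc (fi (follow_tour r (rev W)) e)) / 2)"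
    by (rule ennreal_divide_numeral) simp
  also have "\<dots> \<le> ennreal (real (length W) / 2)"
    using pb by (intro ennreal_leI) simp
  finally show "(\<integral>\<^sup>+ w. hit_time w e \<partial>measure_pmf (sW W)) \<le> ennreal (real (length W) / 2)" .
qed

lemma val_le_sW: assumes W: "cw r W" and cov: "E \<subseteq> ledges W"
  shows "game_val E r \<le> ennreal (real (length W) / 2)"
proof -
  have "game_val E r \<le> searcher_guarantee E (sW W)"
    unfolding game_val_def using sW_strategy[OF W] by (intro INF_lower) simp
  then show ?thesis using sW_guar[OF W cov] by (rule order_trans)
qed

end




lemma mod_contra:
  assumes k: "(3::nat) \<le> k" and ij: "i < k" "j < k" and e1: "i = Suc j mod k" and e2: "j = Suc i mod k"
  shows False
proof (cases "Suc j < k")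
  case True
  have i: "i = Suc j" using e1 True by (simp add: mod_less)
  show False
  proof (cases "Suc i < k")
    case True
    have "Suc i mod k = Suc i" using True by (rule mod_less)
    then show False using e2 i by linarith
  next
    case False
    then have ik: "Suc i = k" using ij(1) by linarith
    then have "Suc i mod k = 0" by simp
    then have "j = 0" using e2 by linarith
    then show False using ik i k by linarith
  qed
next
  case False
  then have jk: "Suc j = k" using ij by linarith
  then have "Suc j mod k = 0" by simp
  then have i0: "i = 0" using e1 by linarith
  have "Suc i mod k = 1" using i0 k by simp
  then have "j = 1" using e2 by linarith
  then show False using jk k by linarith
qed

context gctx
begin

lemma cycle_walk:
  assumes nac: "\<not> acyclic_graph E"
  shows "\<exists>W. cw r W \<and> E \<subseteq> ledges W \<and> length W + 2 \<le> 2 * card E"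
proof -
  obtain cs where cs: "length cs \<ge> 3" "distinct cs" "\<forall>i<length cs. {cs ! i, cs ! ((i + 1) mod length cs)} \<in> E"
    using nac unfolding acyclic_graph_def by blast
  define k where "k = length cs"
  define f where "f i = {cs ! i, cs ! ((i + 1) mod k)}" for i
  define Z where "Z = cs @ [cs ! 0]"
  have k3: "k \<ge> 3" using cs(1) unfolding k_def .
  have fE: "f i \<in> E" if "i < k" for i using cs(3) that unfolding f_def k_def by simp
  have lZ: "length Z = Suc k" unfolding Z_def k_def by simp
  have Zi: "Z ! i = cs ! i" if "i < k" for i using that unfolding Z_def k_def by (simp add: nth_append)
  have Zk: "Z ! k = cs ! 0" unfolding Z_def k_def by (simp add: nth_append)
  have ZS: "{Z ! i, Z ! Suc i} = f i" if "i < k" for i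
  proof (cases "Suc i < k")
    case True then show ?thesis using Zi that unfolding f_def by simp
  next
    case False
    then have "Suc i = k" using that by simp
    then show ?thesis using Zi that Zk unfolding f_def by simp
  qed
  have leZ: "ledges Z = f ` {..<k}"
  proof -
    have "ledges Z = {{Z ! i, Z ! Suc i} | i. Suc i < length Z}" by (rule ledges_nth)
    also have "\<dots> = (\<lambda>i. {Z ! i, Z ! Suc i}) ` {i. Suc i < length Z}" by (rule setcompr_eq_image)
    also have "{i. Suc i < length Z} = {..<k}" using lZ by auto
    also have "(\<lambda>i. {Z ! i, Z ! Suc i}) ` {..<k} = f ` {..<k}" using ZS by (intro image_cong) auto
    finally show ?thesis .
  qed
  have inj: "inj_on f {..<k}"
  proof (rule inj_onI)
    fix i j assume i: "i \<in> {..<k}" and j: "j \<in> {..<k}" and fij: "f i = f j"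
    have ik: "i < k" "j < k" using i j by auto
    have m1: "(i + 1) mod k < k" "(j + 1) mod k < k" using k3 by auto
    have "(cs ! i = cs ! j \<and> cs ! ((i + 1) mod k) = cs ! ((j + 1) mod k)) \<or>
          (cs ! i = cs ! ((j + 1) mod k) \<and> cs ! ((i + 1) mod k) = cs ! j)"
      using fij unfolding f_def by (simp add: doubleton_eq_iff)
    then show "i = j"
    proof
      assume "cs ! i = cs ! j \<and> cs ! ((i + 1) mod k) = cs ! ((j + 1) mod k)"
      have L: "length cs = k" by (simp add: k_def)
      have "(cs ! i = cs ! j) = (i = j)"
        by (rule nth_eq_iff_index_eq[OF cs(2)]) (simp_all add: L ik)
      then show "i = j" using \<open>cs ! i = cs ! j \<and> _\<close> by simp
    next
      assume a: "cs ! i = cs ! ((j + 1) mod k) \<and> cs ! ((i + 1) mod k) = cs ! j"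
      have L: "length cs = k" by (simp add: k_def)
      have q1: "(cs ! i = cs ! ((j + 1) mod k)) = (i = (j + 1) mod k)"
        by (rule nth_eq_iff_index_eq[OF cs(2)]) (use k3 in \<open>simp_all add: L ik\<close>)
      have q2: "(cs ! ((i + 1) mod k) = cs ! j) = ((i + 1) mod k = j)"
        by (rule nth_eq_iff_index_eq[OF cs(2)]) (use k3 in \<open>simp_all add: L ik\<close>)
      have "i = Suc j mod k" using a q1 by simp
      moreover have "j = Suc i mod k" using a q2 by simp
      ultimately show "i = j" using mod_contra[OF k3 ik] by blast
    qed
  qed
  have cardZ: "card (ledges Z) = k" using leZ inj by (simp add: card_image)
  have ZE: "ledges Z \<subseteq> E" using leZ fE by auto
  have c0V: "cs ! 0 \<in> V"
  proof -
    have "f 0 \<in> E" using fE k3 by simp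
    then show ?thesis using E_sub unfolding f_def by auto
  qed
  have ne: "cs \<noteq> []" using k3 unfolding k_def by auto
  have "hd Z = cs ! 0" unfolding Z_def using ne by (cases cs) auto
  then have cwZ: "cw (cs ! 0) Z" unfolding cw_def using ZE by (simp add: Z_def)
  obtain W0 where W0: "cw (cs ! 0) W0" "E \<subseteq> ledges W0" "length W0 \<le> length Z + 2 * card (E - ledges Z)"
    using walk_exists[OF c0V cwZ] by blast
  have "card (E - ledges Z) = card E - k" using ZE finE cardZ by (simp add: card_Diff_subset finite_subset)
  moreover have "k \<le> card E" using card_mono[OF finE ZE] cardZ by simp
  ultimately have lW0: "length W0 + 2 \<le> 2 * card E" using W0(3) lZ k3 by linarith
  have "f 0 \<in> E" using fE k3 by simp
  then have "E \<noteq> {}" by blast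
  then obtain e where e: "e \<in> E" "r \<in> e" using r_in_edge by blast
  have "r \<in> set W0" using ledges_vert[of e W0 r] W0(2) e by blast
  then obtain W where W: "cw r W" "ledges W = ledges W0" "length W = length W0"
    using rotate_walk[OF W0(1)] by blast
  have "E \<subseteq> ledges W" using W(2) W0(2) by simp
  moreover have "length W + 2 \<le> 2 * card E" using W(3) lW0 by simp
  ultimately show ?thesis using W(1) by blast
qed

lemma nontree_val:
  assumes nac: "\<not> acyclic_graph E"
  shows "game_val E r < of_nat (card E)"
proof -
  obtain W where W: "cw r W" "E \<subseteq> ledges W" "length W + 2 \<le> 2 * card E" using cycle_walk[OF nac] by blast
  have "game_val E r \<le> ennreal (real (length W) / 2)" by (rule val_le_sW[OF W(1,2)])
  also have "\<dots> < ennreal (real (card E))"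
  proof (rule ennreal_lessI)
    show "0 < real (card E)" using W(3) by simp
    show "real (length W) / 2 < real (card E)" using W(3) by simp
  qed
  finally show ?thesis by (simp add: ennreal_of_nat_eq_real_of_nat)
qed

definition CPT where "CPT = {xs. chinese_postman_tour E r xs}"

lemma cpt_props: assumes ne: "E \<noteq> {}"
  shows "CPT \<noteq> {}" "finite CPT" "\<And>xs. xs \<in> CPT \<Longrightarrow> cw r xs \<and> E \<subseteq> ledges xs \<and> length xs \<le> 2 * card E + 1"
proof -
  have cw1: "cw r [r]" by (simp add: cw_def)
  obtain W0 where W0: "cw r W0" "E \<subseteq> ledges W0" "length W0 \<le> length [r] + 2 * card (E - ledges [r])"
    using walk_exists[OF rV cw1] by blast
  have lW0: "length W0 \<le> 2 * card E + 1" using W0(3) by simp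
  have ccW0: "closed_cover_walk E r W0" using W0 ccw_iff by blast
  define P where "P n \<longleftrightarrow> (\<exists>xs. closed_cover_walk E r xs \<and> length xs = n)" for n
  have "P (length W0)" using ccW0 unfolding P_def by blast
  then have "P (Least P)" by (rule LeastI)
  then obtain xs0 where xs0: "closed_cover_walk E r xs0" "length xs0 = Least P" unfolding P_def by blast
  have "\<forall>ys. closed_cover_walk E r ys \<longrightarrow> length xs0 \<le> length ys"
  proof (intro allI impI)
    fix ys assume "closed_cover_walk E r ys"
    then have "P (length ys)" unfolding P_def by blast
    then have "Least P \<le> length ys" by (rule Least_le)
    then show "length xs0 \<le> length ys" using xs0(2) by simp
  qed
  then have "xs0 \<in> CPT" using xs0(1) by (simp add: CPT_def chinese_postman_tour_def)
  then show "CPT \<noteq> {}" by blast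
  have pr: "cw r xs \<and> E \<subseteq> ledges xs \<and> length xs \<le> 2 * card E + 1" if "xs \<in> CPT" for xs
  proof -
    have "closed_cover_walk E r xs" "length xs \<le> length W0"
      using that ccW0 by (auto simp: CPT_def chinese_postman_tour_def)
    then show ?thesis using ccw_iff lW0 by auto
  qed
  then show "\<And>xs. xs \<in> CPT \<Longrightarrow> cw r xs \<and> E \<subseteq> ledges xs \<and> length xs \<le> 2 * card E + 1" .
  have "CPT \<subseteq> {xs. set xs \<subseteq> V \<and> length xs \<le> 2 * card E + 1}"
    using pr cw_set_V[OF rV] by blast
  moreover have "finite {xs. set xs \<subseteq> V \<and> length xs \<le> 2 * card E + 1}"
    by (rule finite_lists_length_le[OF finV])
  ultimately show "finite CPT" by (rule finite_subset)
qed

lemma CPT_rev: assumes "xs \<in> CPT" shows "rev xs \<in> CPT"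
proof -
  have a: "closed_cover_walk E r xs" "\<forall>ys. closed_cover_walk E r ys \<longrightarrow> length xs \<le> length ys"
    using assms by (auto simp: CPT_def chinese_postman_tour_def)
  have "cw r xs" "E \<subseteq> ledges xs" using a(1) ccw_iff by blast+
  then have "cw r (rev xs)" "E \<subseteq> ledges (rev xs)" by (auto simp: ledges_rev intro: cw_rev)
  then have "closed_cover_walk E r (rev xs)" using ccw_iff by blast
  then show ?thesis using a(2) by (simp add: CPT_def chinese_postman_tour_def)
qed

lemma uCPT_strategy: assumes ne: "E \<noteq> {}" shows "searcher_strategy E r (uniform_CPT E r)"
proof -
  have "set_pmf (uniform_CPT E r) = follow_tour r ` CPT"
    unfolding uniform_CPT_def CPT_def[symmetric] using cpt_props[OF ne] by simp
  then show ?thesis unfolding searcher_strategy_def using cpt_props(3)[OF ne] walk_follow by auto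
qed

end

context tctx
begin

lemma two_trav: assumes W: "cw r xs" and e: "e \<in> E" "e \<in> ledges xs"
  shows "\<exists>i j. i < j \<and> ltrav xs e i \<and> ltrav xs e j"
proof -
  define w where "w = follow_tour r xs"
  have wk: "walk E r w" unfolding w_def by (rule walk_follow[OF W])
  define L where "L = length xs"
  obtain i0 where i0: "ltrav xs e i0" using ledges_ltrav[OF e] by blast
  define S where "S = {s. s < L - 1 \<and> traverses_at w e s}"
  have cS: "cntw w e (L - 1) = card S" unfolding cntw_def S_def by simp
  have finS: "finite S" unfolding S_def by simp
  have "traverses_at w e i0" using i0 trav_follow[OF W] unfolding w_def ltrav_def by simp
  moreover have "Suc i0 < L" using i0 unfolding ltrav_def L_def by simp
  then have "i0 < L - 1" by linarith
  ultimately have i0S: "i0 \<in> S" unfolding S_def by simp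
  have ne: "xs \<noteq> []" "last xs = r" using W by (auto simp: cw_def)
  have "w (L - 1) = r" unfolding w_def L_def using ne by (simp add: follow_lt last_conv_nth)
  then have "even (cntw w e (L - 1))" using parity[OF wk e(1), of "L - 1"] r_R by simp
  then have evS: "even (card S)" using cS by simp
  have "card S > 0" using i0S finS card_gt_0_iff by blast
  moreover have "card S \<noteq> 1"
  proof
    assume "card S = 1"
    then show False using evS by simp
  qed
  ultimately have "card S \<ge> 2" by linarith
  then have "card (S - {i0}) > 0" using i0S finS by simp
  then have "S - {i0} \<noteq> {}" using card_gt_0_iff by blast
  then obtain j0 where j0: "j0 \<in> S" "j0 \<noteq> i0" by blast
  have lt: "ltrav xs e s" if "s \<in> S" for s
  proof -
    have "traverses_at w e s" using that unfolding S_def by simp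
    then show ?thesis using trav_follow[OF W] unfolding w_def ltrav_def by simp
  qed
  show ?thesis
  proof (cases "i0 < j0")
    case True then show ?thesis using lt i0S j0 by blast
  next
    case False
    then have "j0 < i0" using j0(2) by simp
    then show ?thesis using lt i0S j0 by blast
  qed
qed

lemma uCPT_guar: assumes ne: "E \<noteq> {}"
  shows "searcher_guarantee E (uniform_CPT E r) \<le> of_nat (card E)"
  unfolding searcher_guarantee_def
proof (rule SUP_least)
  fix e assume e: "e \<in> E"
  define H where "H xs = Suc (fi (follow_tour r xs) e)" for xs
  have C: "CPT \<noteq> {}" "finite CPT" using cpt_props[OF ne] by auto
  have prp: "cw r xs \<and> E \<subseteq> ledges xs \<and> length xs \<le> 2 * card E + 1" if "xs \<in> CPT" for xs
    using cpt_props(3)[OF ne that] .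
  have hit: "hit_time (follow_tour r xs) e = of_nat (H xs)" if xsC: "xs \<in> CPT" for xs
  proof -
    obtain i where "ltrav xs e i" using ledges_ltrav[OF e] prp[OF xsC] e by blast
    then have "found (follow_tour r xs) e" using found_follow prp[OF xsC] by blast
    then show ?thesis unfolding H_def by (rule hit_found)
  qed
  have pair: "H xs + H (rev xs) \<le> 2 * card E" if xsC: "xs \<in> CPT" for xs
  proof -
    obtain i j where ij: "i < j" "ltrav xs e i" "ltrav xs e j"
      using two_trav[of xs e] prp[OF xsC] e by blast
    have "H xs + H (rev xs) \<le> Suc i + (length xs - 1 - j)"
      unfolding H_def using pair_bound[OF _ ij(2,3)] prp[OF xsC] by blast
    moreover have "Suc j < length xs" using ij(3) by (simp add: ltrav_def)
    ultimately show ?thesis using ij(1) prp[OF xsC] by linarith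
  qed
  have bij: "bij_betw rev CPT CPT"
    by (rule bij_betw_byWitness[where f'=rev]) (auto simp: CPT_rev)
  have sr: "(\<Sum>xs\<in>CPT. H (rev xs)) = (\<Sum>xs\<in>CPT. H xs)"
    using sum.reindex_bij_betw[OF bij, of H] by simp
  have "2 * (\<Sum>xs\<in>CPT. H xs) = (\<Sum>xs\<in>CPT. H xs + H (rev xs))"
    using sr by (simp add: sum.distrib)
  also have "\<dots> \<le> (\<Sum>xs\<in>CPT. 2 * card E)" using pair by (rule sum_mono)
  finally have sumH: "(\<Sum>xs\<in>CPT. H xs) \<le> card CPT * card E" by simp
  have cpos: "card CPT > 0" using C by (simp add: card_gt_0_iff)
  have "(\<integral>\<^sup>+ w. hit_time w e \<partial>measure_pmf (uniform_CPT E r))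
      = (\<Sum>xs\<in>CPT. hit_time (follow_tour r xs) e) / of_nat (card CPT)"
    unfolding uniform_CPT_def CPT_def[symmetric] using C by (simp add: nn_integral_pmf_of_set)
  also have "\<dots> = of_nat (\<Sum>xs\<in>CPT. H xs) / of_nat (card CPT)"
    using hit by simp
  also have "\<dots> = ennreal (real (\<Sum>xs\<in>CPT. H xs)) / ennreal (real (card CPT))"
    by (simp only: ennreal_of_nat_eq_real_of_nat)
  also have "\<dots> = ennreal (real (\<Sum>xs\<in>CPT. H xs) / real (card CPT))"
    using cpos by (intro divide_ennreal) (auto intro: sum_nonneg)
  also have "\<dots> \<le> ennreal (real (card E))"
  proof (rule ennreal_leI)
    have "real (\<Sum>xs\<in>CPT. H xs) \<le> real (card CPT * card E)" using sumH by (simp only: of_nat_le_iff)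
    then have "real (\<Sum>xs\<in>CPT. H xs) \<le> real (card CPT) * real (card E)" by simp
    then show "real (\<Sum>xs\<in>CPT. H xs) / real (card CPT) \<le> real (card E)"
      using cpos by (simp add: divide_le_eq mult.commute)
  qed
  finally show "(\<integral>\<^sup>+ w. hit_time w e \<partial>measure_pmf (uniform_CPT E r)) \<le> of_nat (card E)"
    by (simp add: ennreal_of_nat_eq_real_of_nat)
qed

end




context tctx
begin

definition RC where "RC eps v \<longleftrightarrow> (\<forall>e1\<in>out v. \<forall>e2\<in>out v.
   (\<Sum>f\<in>B e1. eps f) / real (card (B e1)) = (\<Sum>f\<in>B e2. eps f) / real (card (B e2)))"

definition EP where "EP S eps \<longleftrightarrow> (\<forall>e. e \<notin> S \<longrightarrow> eps e = 0) \<and> (\<forall>e. eps e \<ge> 0)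
   \<and> (\<forall>e\<in>S. \<not> leaf e \<longrightarrow> eps e = 0) \<and> (\<Sum>e\<in>S. eps e) = 1
   \<and> (\<forall>v\<in>V. 2 \<le> card (out v) \<longrightarrow> out v \<subseteq> S \<longrightarrow> RC eps v)"

lemma EP_supp: "EP S ep \<Longrightarrow> e \<notin> S \<Longrightarrow> ep e = 0" unfolding EP_def by simp
lemma EP_nn: "EP S ep \<Longrightarrow> ep e \<ge> 0" unfolding EP_def by simp
lemma EP_leaf: "EP S ep \<Longrightarrow> e \<in> S \<Longrightarrow> \<not> leaf e \<Longrightarrow> ep e = 0" unfolding EP_def by simp
lemma EP_sum: "EP S ep \<Longrightarrow> (\<Sum>e\<in>S. ep e) = 1" unfolding EP_def by simp
lemma EP_RC: "EP S ep \<Longrightarrow> v \<in> V \<Longrightarrow> 2 \<le> card (out v) \<Longrightarrow> out v \<subseteq> S \<Longrightarrow> RC ep v"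
  unfolding EP_def by simp
lemma EP_intro:
  assumes "\<And>e. e \<notin> S \<Longrightarrow> ep e = 0" "\<And>e. ep e \<ge> 0" "\<And>e. e \<in> S \<Longrightarrow> \<not> leaf e \<Longrightarrow> ep e = 0"
    "(\<Sum>e\<in>S. ep e) = 1" "\<And>v. v \<in> V \<Longrightarrow> 2 \<le> card (out v) \<Longrightarrow> out v \<subseteq> S \<Longrightarrow> RC ep v"
  shows "EP S ep"
  unfolding EP_def using assms by simp

lemma card_B_pos: assumes "f \<in> E" shows "card (B f) > 0"
proof -
  have "B f \<noteq> {}" using B_self[of f] by blast
  then show ?thesis using fin_B[OF assms] card_gt_0_iff by blast
qed

lemma combine:
  assumes ne: "out u \<noteq> {}" and H: "\<forall>f\<in>out u. EP (B f) (ef f)"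
  shows "EP (\<Union>(B ` out u)) (\<lambda>e. \<Sum>f\<in>out u. real (card (B f)) / real (card (\<Union>(B ` out u))) * ef f e)"
proof -
  define D where "D = \<Union>(B ` out u)"
  define N where "N = real (card D)"
  define c where "c f = real (card (B f)) / N" for f
  define eps where "eps e = (\<Sum>f\<in>out u. c f * ef f e)" for e
  have oE: "f \<in> E" if "f \<in> out u" for f using that out_iff by auto
  have finD: "finite D" unfolding D_def using fin_out fin_B oE by blast
  have cardD: "card D = (\<Sum>f\<in>out u. card (B f))"
    unfolding D_def using fin_out fin_B oE sib_disj by (intro card_UN_disjoint) auto
  have Npos: "N > 0"
  proof -
    obtain f where "f \<in> out u" using ne by blast
    then have "card (B f) > 0" using card_B_pos oE by blast
    moreover have "card (B f) \<le> card D" using card_mono[OF finD] \<open>f \<in> out u\<close> unfolding D_def by blast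
    ultimately have "card D > 0" by linarith
    then show ?thesis unfolding N_def by simp
  qed
  have c0: "c f \<ge> 0" for f unfolding c_def using Npos by simp
  have supp: "ef f e = 0" if "f \<in> out u" "e \<notin> B f" for f e using EP_supp H that by blast
  have nn: "ef f e \<ge> 0" if "f \<in> out u" for f e using EP_nn H that by blast
  have s1: "(\<Sum>e\<in>B f. ef f e) = 1" if "f \<in> out u" for f using EP_sum H that by blast
  have BD: "B f \<subseteq> D" if "f \<in> out u" for f using that unfolding D_def by blast
  have mass_in: "(\<Sum>e\<in>B k. eps e) = c f0 * (\<Sum>e\<in>B k. ef f0 e)" if f0: "f0 \<in> out u" and k: "B k \<subseteq> B f0" "k \<in> E" for k f0
  proof -
    have "(\<Sum>e\<in>B k. eps e) = (\<Sum>f\<in>out u. c f * (\<Sum>e\<in>B k. ef f e))"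
      unfolding eps_def by (simp add: sum.swap[of _ "B k"] sum_distrib_left)
    also have "\<dots> = c f0 * (\<Sum>e\<in>B k. ef f0 e) + (\<Sum>f\<in>out u - {f0}. c f * (\<Sum>e\<in>B k. ef f e))"
      using f0 fin_out by (simp add: sum.remove)
    also have "(\<Sum>f\<in>out u - {f0}. c f * (\<Sum>e\<in>B k. ef f e)) = 0"
    proof (rule sum.neutral, rule ballI)
      fix f assume f: "f \<in> out u - {f0}"
      have "B f \<inter> B f0 = {}" using sib_disj f f0 by blast
      then have "\<forall>e\<in>B k. ef f e = 0" using supp f k by blast
      then show "c f * (\<Sum>e\<in>B k. ef f e) = 0" by simp
    qed
    finally show ?thesis by simp
  qed
  have P1: "\<forall>e. e \<notin> D \<longrightarrow> eps e = 0"
  proof (intro allI impI)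
    fix e assume "e \<notin> D"
    then have "\<forall>f\<in>out u. ef f e = 0" using supp BD by blast
    then show "eps e = 0" unfolding eps_def by simp
  qed
  have P2: "\<forall>e. eps e \<ge> 0" unfolding eps_def using c0 nn by (auto intro!: sum_nonneg)
  have P3: "\<forall>e\<in>D. \<not> leaf e \<longrightarrow> eps e = 0"
  proof (intro ballI impI)
    fix e assume e: "e \<in> D" "\<not> leaf e"
    have "ef f e = 0" if f: "f \<in> out u" for f
    proof (cases "e \<in> B f")
      case True then show ?thesis using EP_leaf H f e(2) by blast
    next
      case False then show ?thesis using supp f by blast
    qed
    then show "eps e = 0" unfolding eps_def by simp
  qed
  have P4: "(\<Sum>e\<in>D. eps e) = 1"
  proof -
    have "(\<Sum>e\<in>D. eps e) = (\<Sum>f\<in>out u. c f * (\<Sum>e\<in>D. ef f e))"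
      unfolding eps_def by (simp add: sum.swap[of _ D] sum_distrib_left)
    also have "\<dots> = (\<Sum>f\<in>out u. c f)"
    proof (rule sum.cong[OF refl])
      fix f assume f: "f \<in> out u"
      have "(\<Sum>e\<in>D. ef f e) = (\<Sum>e\<in>B f. ef f e)"
        using supp f BD finD by (intro sum.mono_neutral_right) auto
      then show "c f * (\<Sum>e\<in>D. ef f e) = c f" using s1 f by simp
    qed
    also have "\<dots> = (\<Sum>f\<in>out u. real (card (B f))) / N" unfolding c_def by (simp add: sum_divide_distrib)
    also have "\<dots> = 1" using cardD Npos unfolding N_def by simp
    finally show ?thesis .
  qed
  have P5: "\<forall>v\<in>V. 2 \<le> card (out v) \<longrightarrow> out v \<subseteq> D \<longrightarrow> RC eps v"
  proof (intro ballI impI)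
    fix v assume v: "v \<in> V" "2 \<le> card (out v)" "out v \<subseteq> D"
    show "RC eps v"
    proof (cases "v = u")
      case True
      have "(\<Sum>e\<in>B f. eps e) / real (card (B f)) = 1 / N" if f: "f \<in> out u" for f
      proof -
        have "(\<Sum>e\<in>B f. eps e) = c f" using mass_in[OF f _ oE[OF f]] s1[OF f] by simp
        then show ?thesis unfolding c_def using card_B_pos[OF oE[OF f]] by simp
      qed
      then show ?thesis unfolding RC_def True by simp
    next
      case False
      have "out v \<noteq> {}" using v(2) by (cases "out v = {}") auto
      then obtain k0 where k0: "k0 \<in> out v" by blast
      then have "k0 \<in> D" using v(3) by blast
      then obtain f0 where f0: "f0 \<in> out u" "k0 \<in> B f0" unfolding D_def by blast
      have ov: "out v \<subseteq> B f0" by (rule out_sub[OF k0 f0(2) f0(1) False])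
      have RCf0: "RC (ef f0) v" using EP_RC H f0(1) v(1,2) ov by blast
      have kE: "k \<in> E" if "k \<in> out v" for k using that out_iff by auto
      have m: "(\<Sum>e\<in>B k. eps e) = c f0 * (\<Sum>e\<in>B k. ef f0 e)" if k: "k \<in> out v" for k
        using mass_in[OF f0(1) B_trans kE[OF k]] ov k by blast
      show ?thesis unfolding RC_def
      proof (intro ballI)
        fix e1 e2 assume e: "e1 \<in> out v" "e2 \<in> out v"
        have "(\<Sum>f\<in>B e1. ef f0 f) / real (card (B e1)) = (\<Sum>f\<in>B e2. ef f0 f) / real (card (B e2))"
          using RCf0 e unfolding RC_def by blast
        then have "c f0 * ((\<Sum>f\<in>B e1. ef f0 f) / real (card (B e1))) = c f0 * ((\<Sum>f\<in>B e2. ef f0 f) / real (card (B e2)))"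
          by simp
        then show "(\<Sum>f\<in>B e1. eps f) / real (card (B e1)) = (\<Sum>f\<in>B e2. eps f) / real (card (B e2))"
          unfolding m[OF e(1)] m[OF e(2)] by simp
      qed
    qed
  qed
  have "EP D eps" by (rule EP_intro) (use P1 P2 P3 P4 P5 in auto)
  moreover have "eps = (\<lambda>e. \<Sum>f\<in>out u. real (card (B f)) / real (card (\<Union>(B ` out u))) * ef f e)"
    unfolding eps_def c_def N_def D_def by simp
  ultimately show ?thesis unfolding D_def by simp
qed

lemma ep_edge: "g \<in> E \<Longrightarrow> \<exists>ep. EP (B g) ep"
proof (induction "card (B g)" arbitrary: g rule: less_induct)
  case less
  show ?case
  proof (cases "leaf g")
    case True
    have Bg: "B g = {g}" by (rule leaf_B[OF less(2) True])
    define ep where "ep e = (if e = g then 1 else 0 :: real)" for e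
    have "\<not> (2 \<le> card (out v) \<and> out v \<subseteq> {g})" for v
    proof
      assume a: "2 \<le> card (out v) \<and> out v \<subseteq> {g}"
      then have "card (out v) \<le> card {g}" by (intro card_mono) auto
      then show False using a by simp
    qed
    then have "EP (B g) ep" unfolding Bg using \<open>leaf g\<close> by (intro EP_intro) (auto simp: ep_def)
    then show ?thesis by blast
  next
    case False
    define u where "u = hd_of g"
    have ne: "out u \<noteq> {}" using False leaf_iff unfolding u_def by blast
    have "\<forall>f\<in>out u. \<exists>ep. EP (B f) ep"
    proof
      fix f assume f: "f \<in> out u"
      have "f \<in> E" using f out_iff by auto
      then show "\<exists>ep. EP (B f) ep" using less(1)[OF card_child[OF less(2)]] f unfolding u_def by blast
    qed
    from bchoice[OF this] obtain ef where ef: "\<forall>f\<in>out u. EP (B f) (ef f)" by blast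
    define ep where "ep e = (\<Sum>f\<in>out u. real (card (B f)) / real (card (\<Union>(B ` out u))) * ef f e)" for e
    have EPD: "EP (\<Union>(B ` out u)) ep" unfolding ep_def by (rule combine[OF ne ef])
    have BD: "B g = insert g (\<Union>(B ` out u))" "g \<notin> \<Union>(B ` out u)" using B_decomp[OF less(2)] unfolding u_def by auto
    have Dsub: "\<Union>(B ` out u) \<subseteq> B g" using child_sub(3)[OF less(2)] unfolding u_def by blast
    have Dcase: "e = g \<or> e \<in> \<Union>(B ` out u)" if "e \<in> B g" for e
      using cover_g[OF less(2) that] unfolding u_def by blast
    have finD: "finite (\<Union>(B ` out u))" using fin_B[OF less(2)] Dsub by (rule finite_subset[rotated])
    have epg: "ep g = 0" using EP_supp[OF EPD BD(2)] .
    have "EP (B g) ep"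
    proof (rule EP_intro)
      show "ep e = 0" if "e \<notin> B g" for e using EP_supp[OF EPD] that Dsub by blast
      show "ep e \<ge> 0" for e using EP_nn[OF EPD] .
      show "ep e = 0" if "e \<in> B g" "\<not> leaf e" for e
      proof (cases "e = g")
        case True then show ?thesis using epg by simp
      next
        case False
        then have "e \<in> \<Union>(B ` out u)" using Dcase that(1) by blast
        then show ?thesis using EP_leaf[OF EPD] that(2) by blast
      qed
      have "(\<Sum>e\<in>insert g (\<Union>(B ` out u)). ep e) = 1" using EP_sum[OF EPD] BD(2) finD epg by simp
      then show "(\<Sum>e\<in>B g. ep e) = 1" unfolding BD(1)[symmetric] .
      show "RC ep v" if v: "v \<in> V" "2 \<le> card (out v)" "out v \<subseteq> B g" for v
      proof -
        have "g \<notin> out v"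
        proof
          assume go: "g \<in> out v"
          have "out v - {g} \<noteq> {}"
          proof
            assume "out v - {g} = {}"
            then have "out v \<subseteq> {g}" by blast
            then have "card (out v) \<le> 1" using card_mono[of "{g}" "out v"] by simp
            then show False using v(2) by simp
          qed
          then obtain k where k: "k \<in> out v" "k \<noteq> g" by blast
          have "tl_of g = v" "tl_of k = v" "k \<in> E" using go k out_iff by auto
          have "k \<in> B g" using k v(3) by blast
          then have "k \<inter> R g = {}" using k(2) by (simp add: below_def)
          moreover have "v \<in> k" using tl_in[OF \<open>k \<in> E\<close>] \<open>tl_of k = v\<close> by simp
          moreover have "v \<in> R g" using edge_split(3)[OF less(2)] \<open>tl_of g = v\<close> by simp
          ultimately show False by blast
        qed
        then have "out v \<subseteq> \<Union>(B ` out u)" using v(3) Dcase by blast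
        then show "RC ep v" using EP_RC[OF EPD v(1,2)] by blast
      qed
    qed
    then show ?thesis by blast
  qed
qed

lemma ebd_exists: assumes ne: "E \<noteq> {}" shows "\<exists>ep. equal_branching_density V E r ep"
proof -
  obtain e0 where "e0 \<in> E" using ne by blast
  then have neo: "out r \<noteq> {}" using cover_r by blast
  have "\<forall>f\<in>out r. \<exists>ep. EP (B f) ep" using ep_edge out_iff by blast
  from bchoice[OF this] obtain ef where ef: "\<forall>f\<in>out r. EP (B f) (ef f)" by blast
  define ep where "ep e = (\<Sum>f\<in>out r. real (card (B f)) / real (card (\<Union>(B ` out r))) * ef f e)" for e
  have EPU: "EP (\<Union>(B ` out r)) ep" unfolding ep_def by (rule combine[OF neo ef])
  have UE: "\<Union>(B ` out r) = E" using E_decomp by (rule sym)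
  have EPE: "EP E ep" using EPU unfolding UE .
  have "hider_strategy E ep" using EP_nn[OF EPE] EP_sum[OF EPE] unfolding hider_strategy_def by blast
  moreover have "\<forall>e\<in>E. \<not> leaf e \<longrightarrow> ep e = 0" using EP_leaf[OF EPE] by blast
  moreover have "\<forall>v\<in>V. 2 \<le> card (out v) \<longrightarrow> RC ep v"
  proof (intro ballI impI)
    fix v assume "v \<in> V" "2 \<le> card (out v)"
    moreover have "out v \<subseteq> E" by (auto simp: out_edges_def)
    ultimately show "RC ep v" using EP_RC[OF EPE] by blast
  qed
  ultimately have "equal_branching_density V E r ep"
    unfolding equal_branching_density_def RC_def by blast
  then show ?thesis by blast
qed

end




context gctx
begin

lemma weak_duality:
  assumes p: "hider_strategy E p" and s: "searcher_strategy E r \<sigma>"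
  shows "hider_guarantee E r p \<le> searcher_guarantee E \<sigma>"
proof -
  define hg where "hg = hider_guarantee E r p"
  define S where "S = searcher_guarantee E \<sigma>"
  have pn: "p e \<ge> 0" if "e \<in> E" for e using p that by (simp add: hider_strategy_def)
  have ps: "(\<Sum>e\<in>E. p e) = 1" using p by (simp add: hider_strategy_def)
  have pt: "hg \<le> (\<Sum>e\<in>E. ennreal (p e) * hit_time w e)" if "w \<in> set_pmf \<sigma>" for w
  proof -
    have "walk E r w" using s that by (auto simp: searcher_strategy_def)
    then show ?thesis unfolding hg_def hider_guarantee_def by (intro INF_lower) simp
  qed
  have "hg = (\<integral>\<^sup>+ w. hg \<partial>measure_pmf \<sigma>)"
    by (simp add: measure_pmf.emeasure_space_1)
  also have "\<dots> \<le> (\<integral>\<^sup>+ w. (\<Sum>e\<in>E. ennreal (p e) * hit_time w e) \<partial>measure_pmf \<sigma>)"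
    by (rule nn_integral_mono_AE) (use pt in \<open>auto intro: AE_pmfI\<close>)
  also have "\<dots> = (\<Sum>e\<in>E. \<integral>\<^sup>+ w. ennreal (p e) * hit_time w e \<partial>measure_pmf \<sigma>)"
    by (rule nn_integral_sum) simp
  also have "\<dots> = (\<Sum>e\<in>E. ennreal (p e) * \<integral>\<^sup>+ w. hit_time w e \<partial>measure_pmf \<sigma>)"
    by (rule sum.cong[OF refl]) (rule nn_integral_cmult, simp)
  also have "\<dots> \<le> (\<Sum>e\<in>E. ennreal (p e) * S)"
  proof (rule sum_mono)
    fix e assume e: "e \<in> E"
    have "(\<integral>\<^sup>+ w. hit_time w e \<partial>measure_pmf \<sigma>) \<le> S"
      unfolding S_def searcher_guarantee_def using e by (intro SUP_upper) simp
    then show "ennreal (p e) * (\<integral>\<^sup>+ w. hit_time w e \<partial>measure_pmf \<sigma>) \<le> ennreal (p e) * S"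
      by (rule mult_left_mono) simp
  qed
  also have "\<dots> = (\<Sum>e\<in>E. ennreal (p e)) * S" by (simp add: sum_distrib_right)
  also have "(\<Sum>e\<in>E. ennreal (p e)) = ennreal (\<Sum>e\<in>E. p e)" using pn by simp
  also have "\<dots> = 1" using ps by simp
  finally show ?thesis unfolding hg_def S_def by simp
qed

end

context tctx
begin

lemma hider_lower:
  assumes ne: "E \<noteq> {}" and ebd: "equal_branching_density V E r eps"
  shows "of_nat (card E) \<le> hider_guarantee E r eps"
  unfolding hider_guarantee_def
proof (rule INF_greatest)
  fix w assume "w \<in> {w. walk E r w}"
  then have wk: "walk E r w" by simp
  interpret W: wctx V E r eps w by (rule wctx.intro[OF tctx_axioms wctx_axioms.intro[OF ebd wk]])
  show "of_nat (card E) \<le> (\<Sum>e\<in>E. ennreal (eps e) * hit_time w e)" by (rule W.walk_lower[OF ne])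
qed

lemma tree_main:
  assumes ne: "E \<noteq> {}"
  shows "game_val E r = of_nat (card E)"
    "\<exists>eps. equal_branching_density V E r eps"
    "\<And>eps. equal_branching_density V E r eps \<Longrightarrow> hider_guarantee E r eps = of_nat (card E)"
    "searcher_strategy E r (uniform_CPT E r)"
    "searcher_guarantee E (uniform_CPT E r) = of_nat (card E)"
proof -
  have hl: "hider_guarantee E r eps \<le> game_val E r" if hs: "hider_strategy E eps" for eps
    unfolding game_val_def
  proof (rule INF_greatest)
    fix \<sigma> assume "\<sigma> \<in> {\<sigma>. searcher_strategy E r \<sigma>}"
    then show "hider_guarantee E r eps \<le> searcher_guarantee E \<sigma>" using weak_duality[OF hs] by simp
  qed
  have us: "searcher_strategy E r (uniform_CPT E r)" by (rule uCPT_strategy[OF ne])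
  have vu: "game_val E r \<le> searcher_guarantee E (uniform_CPT E r)"
    unfolding game_val_def using us by (intro INF_lower) simp
  have ug: "searcher_guarantee E (uniform_CPT E r) \<le> of_nat (card E)" by (rule uCPT_guar[OF ne])
  obtain eps0 where e0: "equal_branching_density V E r eps0" using ebd_exists[OF ne] by blast
  have hs0: "hider_strategy E eps0" using e0 by (simp add: equal_branching_density_def)
  have "of_nat (card E) \<le> game_val E r"
    using hider_lower[OF ne e0] hl[OF hs0] by (rule order_trans)
  then show gv: "game_val E r = of_nat (card E)" using vu ug by (auto intro: antisym)
  show "\<exists>eps. equal_branching_density V E r eps" using e0 by blast
  show "hider_guarantee E r eps = of_nat (card E)" if e: "equal_branching_density V E r eps" for eps
  proof -
    have "hider_strategy E eps" using e by (simp add: equal_branching_density_def)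
    then have "hider_guarantee E r eps \<le> of_nat (card E)" using hl gv by simp
    then show ?thesis using hider_lower[OF ne e] by (auto intro: antisym)
  qed
  show "searcher_strategy E r (uniform_CPT E r)" by (rule us)
  show "searcher_guarantee E (uniform_CPT E r) = of_nat (card E)" using vu ug gv by (auto intro: antisym)
qed

end

theorem mainTheorem2:
  fixes V :: "'v set" and E :: "'v set set" and r :: 'v
  assumes "rooted_graph V E r" and "connected_graph V E" and "E \<noteq> {}"
  shows "game_val E r \<le> of_nat (card E) \<and>
         (game_val E r = of_nat (card E) \<longleftrightarrow> is_tree V E) \<and>
         (is_tree V E \<longrightarrow>
           (\<exists>\<epsilon>. equal_branching_density V E r \<epsilon>) \<and>
           (\<forall>\<epsilon>. equal_branching_density V E r \<epsilon> \<longrightarrow> hider_guarantee E r \<epsilon> = game_val E r) \<and>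
           searcher_strategy E r (uniform_CPT E r) \<and>
           searcher_guarantee E (uniform_CPT E r) = game_val E r)"
proof -
  interpret G: gctx V E r by (rule gctx.intro[OF assms(1,2)])
  show ?thesis
  proof (cases "acyclic_graph E")
    case True
    interpret T: tctx V E r by (rule tctx.intro[OF G.gctx_axioms tctx_axioms.intro[OF True]])
    have tr: "is_tree V E" using assms(2) True by (simp add: is_tree_def)
    show ?thesis using T.tree_main[OF assms(3)] tr by simp
  next
    case False
    have lt: "game_val E r < of_nat (card E)" by (rule G.nontree_val[OF False])
    have nt: "\<not> is_tree V E" using False by (simp add: is_tree_def)
    have "game_val E r \<le> of_nat (card E)" using lt by (rule less_imp_le)
    moreover have "game_val E r \<noteq> of_nat (card E)" using lt by simp
    ultimately show ?thesis using nt by simp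
  qed
qed



end
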